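(* Let $\mathcal{H}$ be a real Hilbert space, $f:\mathcal{H}\to\mathbb{R}$ $\mu$-strongly convex and $L$-smooth with $0<\mu<L<\infty$, $g:\mathcal{H}\to\mathbb{R}\cup\{+\infty\}$ convex, proper and lower semicontinuous, $q=\mu/L$, and $x^\star$ the unique minimizer of $f+g$. Let the Prox-TMM iterates and the quantities $\mathcal{V}_k^\infty$ be as defined in the context. Then for every $k\in\mathbb{N}$ (i.e. $k\ge1$), $$\mathcal{V}_{k+1}^\infty\le(1-\sqrt q)^2\,\mathcal{V}_k^\infty.$$
   Context: $\operatorname{Prox}^{\gamma}_g(x)=\operatorname{argmin}_z\big(g(z)+\frac{1}{2\gamma}\|x-z\|^2\big)$. Prox-TMM from $x^0\in\mathcal{H}$: $z^0=x^0$, and for $k\ge0$: $y^k=\frac{2\sqrt q}{1+\sqrt q}z^k+\frac{1-\sqrt q}{1+\sqrt q}x^k$, $\bar z^{k+1}=(1-\sqrt q)z^k+\sqrt q\,y^k-\frac{1}{\sqrt qL}\nabla f(y^k)$, $z^{k+1}=\operatorname{Prox}^{1/(\sqrt qL)}_g(\bar z^{k+1})$, $x^{k+1}=y^k-\frac1L\nabla f(y^k)-\sqrt q(\bar z^{k+1}-z^{k+1})$. Define $\mathcal{I}_f(x,y)=f(x)-f(y)-\langle\nabla f(y),x-y\rangle-\frac{\mu}{2}\|x-y\|^2-\frac{1}{2(L-\mu)}\|\nabla f(x)-\nabla f(y)-\mu(x-y)\|^2$ and $\mathcal{I}_g(x,y,s)=g(x)-g(y)-\langle s,x-y\rangle$.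 For $k\ge1$ let $s_g^k=\sqrt qL(\bar z^k-z^k)$ (so $s_g^k\in\partial g(z^k)$), let $s_g^\star=-\nabla f(x^\star)$, and $$\mathcal{V}_k^\infty=(1-q)\mathcal{I}_f(y^{k-1},x^\star)+q\,\mathcal{I}_g(x^\star,z^k,s_g^k)+\sqrt q(\sqrt q-1)\mathcal{I}_g(z^k,x^\star,s_g^\star)+\frac1{2L}\|s_g^k-s_g^\star\|^2+\mu\|z^k-x^\star\|^2.$$ *)

theory Defs
  imports "HOL-Analysis.Analysis"
begin

text \<open>An extended-real-valued function g : H -> R \<union> {+inf} is represented by its
  effective domain D (where g is finite) and its real values on D; outside D,
  g is +inf.\<close>

definition proper_convex_lsc :: "'a::real_normed_vector set \<Rightarrow> ('a \<Rightarrow> real) \<Rightarrow> bool" where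
  "proper_convex_lsc D g \<longleftrightarrow> D \<noteq> {} \<and> convex_on D g \<and> closed {(x, t). x \<in> D \<and> g x \<le> t}"

definition prox :: "'a::real_inner set \<Rightarrow> ('a \<Rightarrow> real) \<Rightarrow> real \<Rightarrow> 'a \<Rightarrow> 'a" where
  "prox D g \<gamma> x = (SOME z. z \<in> D \<and>
     (\<forall>w\<in>D. g z + 1 / (2 * \<gamma>) * (norm (x - z))\<^sup>2 \<le> g w + 1 / (2 * \<gamma>) * (norm (x - w))\<^sup>2))"

definition I_f :: "('a::real_inner \<Rightarrow> real) \<Rightarrow> ('a \<Rightarrow> 'a) \<Rightarrow> real \<Rightarrow> real \<Rightarrow> 'a \<Rightarrow> 'a \<Rightarrow> real" where
  "I_f f gradf \<mu> L x y = f x - f y - inner (gradf y) (x - y) - \<mu> / 2 * (norm (x - y))\<^sup>2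
     - 1 / (2 * (L - \<mu>)) * (norm (gradf x - gradf y - \<mu> *\<^sub>R (x - y)))\<^sup>2"

definition I_g :: "('a::real_inner \<Rightarrow> real) \<Rightarrow> 'a \<Rightarrow> 'a \<Rightarrow> 'a \<Rightarrow> real" where
  "I_g g x y s = g x - g y - inner s (x - y)"

end

theory Submission
  imports Defs
begin


lemma limit_le:
  fixes A B C :: real
  assumes "\<And>t. 0 < t \<Longrightarrow> t \<le> 1 \<Longrightarrow> B - t * C \<le> A"
  shows "B \<le> A"
proof (rule ccontr)
  assume "\<not> B \<le> A"
  hence BA: "A < B" by simp
  show False
  proof (cases "C \<le> 0")
    case True
    have "B - 1 * C \<le> A" using assms[of 1] by simp
    with True BA show False by simp
  next
    case False
    define t where "t = min 1 ((B - A) / (2 * C))"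
    have t0: "0 < t" using False BA by (simp add: t_def)
    have t1: "t \<le> 1" by (simp add: t_def)
    have "t * C \<le> (B - A) / (2 * C) * C" using False by (intro mult_right_mono) (auto simp: t_def)
    also have "\<dots> = (B - A) / 2" using False by (simp add: field_simps)
    finally have "t * C \<le> (B - A) / 2" .
    with assms[OF t0 t1] BA show False by simp
  qed
qed

lemma line_deriv:
  fixes f :: "'a::real_inner \<Rightarrow> real"
  assumes grad: "\<And>u. (f has_derivative (\<lambda>h. inner (gradf u) h)) (at u)"
  shows "((\<lambda>t. f (u + t *\<^sub>R d)) has_real_derivative inner (gradf (u + t *\<^sub>R d)) d) (at t)"
proof -
  have "((\<lambda>t. u + t *\<^sub>R d) has_derivative (\<lambda>t. t *\<^sub>R d)) (at t)"
    by (auto intro!: derivative_eq_intros)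
  from has_derivative_compose[OF this grad]
  have "((\<lambda>t. f (u + t *\<^sub>R d)) has_derivative (\<lambda>h. inner (gradf (u + t *\<^sub>R d)) (h *\<^sub>R d))) (at t)" .
  then show ?thesis
    by (rule has_derivative_imp_has_field_derivative) (simp add: mult.commute)
qed

lemma descent_bound:
  fixes f :: "'a::real_inner \<Rightarrow> real"
  assumes grad: "\<And>u. (f has_derivative (\<lambda>h. inner (gradf u) h)) (at u)"
    and smooth: "\<And>u v. norm (gradf u - gradf v) \<le> L * norm (u - v)"
  shows "\<bar>f v - f u - inner (gradf u) (v - u)\<bar> \<le> L/2 * (norm (v - u))\<^sup>2"
proof -
  define d where "d = v - u"
  have key: "\<bar>inner (gradf (u + t *\<^sub>R d)) d - inner (gradf u) d\<bar> \<le> L * t * (norm d)\<^sup>2"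
    if "0 \<le> t" for t
  proof -
    have "\<bar>inner (gradf (u + t *\<^sub>R d)) d - inner (gradf u) d\<bar>
        = \<bar>inner (gradf (u + t *\<^sub>R d) - gradf u) d\<bar>" by (simp add: inner_diff_left)
    also have "\<dots> \<le> norm (gradf (u + t *\<^sub>R d) - gradf u) * norm d" by (rule Cauchy_Schwarz_ineq2)
    also have "\<dots> \<le> (L * norm (t *\<^sub>R d)) * norm d"
      using smooth[of "u + t *\<^sub>R d" u] by (intro mult_right_mono) auto
    also have "\<dots> = L * t * (norm d)\<^sup>2" using that by (simp add: power2_eq_square)
    finally show ?thesis .
  qed
  have D: "((\<lambda>t. f (u + t *\<^sub>R d)) has_real_derivative inner (gradf (u + t *\<^sub>R d)) d) (at t)" for t
    by (rule line_deriv[OF grad])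
  define \<phi>1 where "\<phi>1 t = f (u + t *\<^sub>R d) - t * inner (gradf u) d - L/2 * t^2 * (norm d)\<^sup>2" for t
  define \<phi>2 where "\<phi>2 t = - f (u + t *\<^sub>R d) + t * inner (gradf u) d - L/2 * t^2 * (norm d)\<^sup>2" for t
  have "\<phi>1 1 \<le> \<phi>1 0"
  proof (rule DERIV_nonpos_imp_nonincreasing[of 0 1])
    fix t :: real assume t: "0 \<le> t" "t \<le> 1"
    have "DERIV \<phi>1 t :> inner (gradf (u + t *\<^sub>R d)) d - inner (gradf u) d - L * t * (norm d)\<^sup>2"
      unfolding \<phi>1_def by (auto intro!: derivative_eq_intros D)
    moreover have "inner (gradf (u + t *\<^sub>R d)) d - inner (gradf u) d - L * t * (norm d)\<^sup>2 \<le> 0"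
      using key[OF t(1)] by linarith
    ultimately show "\<exists>y. DERIV \<phi>1 t :> y \<and> y \<le> 0" by blast
  qed simp
  moreover have "\<phi>2 1 \<le> \<phi>2 0"
  proof (rule DERIV_nonpos_imp_nonincreasing[of 0 1])
    fix t :: real assume t: "0 \<le> t" "t \<le> 1"
    have "DERIV \<phi>2 t :> - inner (gradf (u + t *\<^sub>R d)) d + inner (gradf u) d - L * t * (norm d)\<^sup>2"
      unfolding \<phi>2_def by (auto intro!: derivative_eq_intros D)
    moreover have "- inner (gradf (u + t *\<^sub>R d)) d + inner (gradf u) d - L * t * (norm d)\<^sup>2 \<le> 0"
      using key[OF t(1)] by linarith
    ultimately show "\<exists>y. DERIV \<phi>2 t :> y \<and> y \<le> 0" by blast
  qed simp
  ultimately have "f v - f u - inner (gradf u) (v - u) \<le> L/2 * (norm (v - u))\<^sup>2"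
    and "- (f v - f u - inner (gradf u) (v - u)) \<le> L/2 * (norm (v - u))\<^sup>2"
    unfolding \<phi>1_def \<phi>2_def d_def by simp_all
  then show ?thesis by (simp only: abs_le_iff)
qed

lemma aux_lin:
  fixes X F G I N t L \<mu> :: real
  assumes "- (X - F - t * G) \<le> L/2 * (t^2 * N)"
  shows "t * G - \<mu> * t * I - t^2 * ((L + \<mu>)/2 * N) \<le> X - F - \<mu>/2 * (2 * t * I + t^2 * N)"
  using assms by (simp add: field_simps power2_eq_square)

lemma convex_grad_ineq:
  fixes f :: "'a::real_inner \<Rightarrow> real"
  assumes grad: "\<And>u. (f has_derivative (\<lambda>h. inner (gradf u) h)) (at u)"
    and smooth: "\<And>u v. norm (gradf u - gradf v) \<le> L * norm (u - v)"
    and cvx: "convex_on UNIV (\<lambda>u. f u - \<mu> / 2 * (norm u)\<^sup>2)"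
  shows "f v - \<mu>/2 * (norm v)\<^sup>2 \<ge> f u - \<mu>/2 * (norm u)\<^sup>2 + inner (gradf u - \<mu> *\<^sub>R u) (v - u)"
proof -
  define h where "h w = f w - \<mu> / 2 * (norm w)\<^sup>2" for w
  define d where "d = v - u"
  have "inner (gradf u - \<mu> *\<^sub>R u) d - t * ((L + \<mu>)/2 * (norm d)\<^sup>2) \<le> h v - h u"
    if t: "0 < t" "t \<le> 1" for t
  proof -
    have "h ((1 - t) *\<^sub>R u + t *\<^sub>R v) \<le> (1 - t) * h u + t * h v"
      using convex_onD[OF cvx, of t u v] t unfolding h_def by simp
    moreover have "(1 - t) *\<^sub>R u + t *\<^sub>R v = u + t *\<^sub>R d"
      by (simp add: d_def algebra_simps)
    ultimately have c1: "h (u + t *\<^sub>R d) \<le> (1 - t) * h u + t * h v" by simp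
    have db: "\<bar>f (u + t *\<^sub>R d) - f u - inner (gradf u) (t *\<^sub>R d)\<bar> \<le> L/2 * (norm (t *\<^sub>R d))\<^sup>2"
      using descent_bound[OF grad smooth, of "u + t *\<^sub>R d" u] by simp
    have nn: "(norm (u + t *\<^sub>R d))\<^sup>2 = (norm u)\<^sup>2 + 2 * t * inner u d + t^2 * (norm d)\<^sup>2"
      unfolding power2_norm_eq_inner by (simp add: inner_add_left inner_add_right inner_commute power2_eq_square algebra_simps)
    have nt: "(norm (t *\<^sub>R d))\<^sup>2 = t^2 * (norm d)\<^sup>2" using t by (simp add: power_mult_distrib)
    have lb: "- (f (u + t *\<^sub>R d) - f u - inner (gradf u) (t *\<^sub>R d)) \<le> L/2 * (norm (t *\<^sub>R d))\<^sup>2"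
      by (rule abs_le_D2[OF db])
    have lb': "- (f (u + t *\<^sub>R d) - f u - t * inner (gradf u) d) \<le> L/2 * (t^2 * (norm d)\<^sup>2)"
      using lb nt by simp
    have hh: "h (u + t *\<^sub>R d) - h u = f (u + t *\<^sub>R d) - f u - \<mu>/2 * (2 * t * inner u d + t^2 * (norm d)\<^sup>2)"
      using nn by (simp add: h_def algebra_simps)
    have ii: "t * inner (gradf u - \<mu> *\<^sub>R u) d = t * inner (gradf u) d - \<mu> * t * inner u d"
      by (simp add: inner_diff_left algebra_simps)
    have "t * inner (gradf u - \<mu> *\<^sub>R u) d - t^2 * ((L + \<mu>)/2 * (norm d)\<^sup>2) \<le> h (u + t *\<^sub>R d) - h u"
      unfolding hh ii by (rule aux_lin[OF lb'])
    with c1 have "t * inner (gradf u - \<mu> *\<^sub>R u) d - t^2 * ((L + \<mu>)/2 * (norm d)\<^sup>2) \<le> t * (h v - h u)"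
      by (simp add: algebra_simps)
    then have "t * (inner (gradf u - \<mu> *\<^sub>R u) d - t * ((L + \<mu>)/2 * (norm d)\<^sup>2)) \<le> t * (h v - h u)"
      by (simp add: algebra_simps power2_eq_square)
    then show ?thesis using t by simp
  qed
  then have "inner (gradf u - \<mu> *\<^sub>R u) d \<le> h v - h u" by (rule limit_le)
  then show ?thesis unfolding h_def d_def by simp
qed

lemma h_upper:
  fixes f :: "'a::real_inner \<Rightarrow> real"
  assumes grad: "\<And>u. (f has_derivative (\<lambda>h. inner (gradf u) h)) (at u)"
    and smooth: "\<And>u v. norm (gradf u - gradf v) \<le> L * norm (u - v)"
  shows "f w - \<mu>/2 * (norm w)\<^sup>2 \<le> f a - \<mu>/2 * (norm a)\<^sup>2 + inner (gradf a - \<mu> *\<^sub>R a) (w - a) + (L - \<mu>)/2 * (norm (w - a))\<^sup>2"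
proof -
  have db: "f w - f a - inner (gradf a) (w - a) \<le> L/2 * (norm (w - a))\<^sup>2"
    using abs_le_D1[OF descent_bound[OF grad smooth, where v=w and u=a]] .
  have nn: "(norm w)\<^sup>2 = (norm a)\<^sup>2 + 2 * inner a (w - a) + (norm (w - a))\<^sup>2"
    unfolding power2_norm_eq_inner by (simp add: inner_diff_left inner_diff_right inner_commute algebra_simps)
  show ?thesis using db unfolding nn by (simp add: inner_diff_left inner_diff_right field_simps)
qed

lemma interp:
  fixes f :: "'a::real_inner \<Rightarrow> real"
  assumes grad: "\<And>u. (f has_derivative (\<lambda>h. inner (gradf u) h)) (at u)"
    and smooth: "\<And>u v. norm (gradf u - gradf v) \<le> L * norm (u - v)"
    and cvx: "convex_on UNIV (\<lambda>u. f u - \<mu> / 2 * (norm u)\<^sup>2)"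
    and mu: "\<mu> < L"
  shows "0 \<le> I_f f gradf \<mu> L a b"
proof -
  define h where "h w = f w - \<mu> / 2 * (norm w)\<^sup>2" for w
  define Ga where "Ga = gradf a - \<mu> *\<^sub>R a"
  define Gb where "Gb = gradf b - \<mu> *\<^sub>R b"
  define e where "e = gradf a - gradf b - \<mu> *\<^sub>R (a - b)"
  define c where "c = 1 / (L - \<mu>)"
  have c0: "0 < c" using mu by (simp add: c_def)
  have cL: "c * (L - \<mu>) = 1" using mu by (simp add: c_def)
  define w where "w = a - c *\<^sub>R e"
  have eG: "e = Ga - Gb" by (simp add: e_def Ga_def Gb_def algebra_simps)
  have i1: "h b + inner Gb (w - b) \<le> h w"
    using convex_grad_ineq[OF grad smooth cvx, where u=b and v=w] by (simp add: h_def Gb_def)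
  have i2: "h w \<le> h a + inner Ga (w - a) + (L - \<mu>)/2 * (norm (w - a))\<^sup>2"
    using h_upper[OF grad smooth, where w=w and \<mu>=\<mu> and a=a] by (simp add: h_def Ga_def)
  have wa: "w - a = - (c *\<^sub>R e)" by (simp add: w_def)
  have wb: "w - b = (a - b) - c *\<^sub>R e" by (simp add: w_def)
  have t1: "inner Ga (w - a) - inner Gb (w - b) = - inner Gb (a - b) - c * (norm e)\<^sup>2"
    unfolding wa wb eG power2_norm_eq_inner by (simp add: inner_diff_left inner_diff_right inner_commute algebra_simps)
  have t2: "(L - \<mu>)/2 * (norm (w - a))\<^sup>2 = c/2 * (norm e)\<^sup>2"
  proof -
    have n: "(norm (w - a))\<^sup>2 = c^2 * (norm e)\<^sup>2" using c0 by (simp add: wa power_mult_distrib)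
    have "(L - \<mu>) * c^2 = c" using cL by (simp add: power2_eq_square algebra_simps)
    then show ?thesis unfolding n by (metis (no_types, lifting) mult.assoc times_divide_eq_left)
  qed
  have main: "c/2 * (norm e)\<^sup>2 \<le> h a - h b - inner Gb (a - b)"
    using i1 i2 t1 t2 by linarith
  have hid: "h a - h b - inner Gb (a - b) = f a - f b - inner (gradf b) (a - b) - \<mu>/2 * (norm (a - b))\<^sup>2"
    unfolding h_def Gb_def power2_norm_eq_inner
    by (simp add: inner_diff_left inner_diff_right inner_commute algebra_simps)
  have eq: "1 / (2 * (L - \<mu>)) * (norm e)\<^sup>2 = c/2 * (norm e)\<^sup>2" by (simp add: c_def)
  show ?thesis unfolding I_f_def e_def[symmetric] eq using main hid by linarith
qed

lemma opt_subgrad: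
  fixes f :: "'a::real_inner \<Rightarrow> real"
  assumes grad: "\<And>u. (f has_derivative (\<lambda>h. inner (gradf u) h)) (at u)"
    and smooth: "\<And>u v. norm (gradf u - gradf v) \<le> L * norm (u - v)"
    and g_prop: "proper_convex_lsc D g"
    and xs: "xs \<in> D" and xs_min: "\<And>u. u \<in> D \<Longrightarrow> f xs + g xs \<le> f u + g u"
    and u: "u \<in> D"
  shows "0 \<le> I_g g u xs (- gradf xs)"
proof -
  have cvx: "convex_on D g" using g_prop by (simp add: proper_convex_lsc_def)
  then have cD: "convex D" by (simp add: convex_on_def)
  define d where "d = u - xs"
  have "0 - t * (L/2 * (norm d)\<^sup>2) \<le> I_g g u xs (- gradf xs)" if t: "0 < t" "t \<le> 1" for t
  proof -
    define p where "p = (1 - t) *\<^sub>R xs + t *\<^sub>R u"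
    have pD: "p \<in> D" using cD xs u t unfolding p_def by (simp add: convex_def)
    have gp: "g p \<le> (1 - t) * g xs + t * g u" using convex_onD[OF cvx, of t xs u] t xs u by (simp add: p_def)
    have pe: "p = xs + t *\<^sub>R d" by (simp add: p_def d_def algebra_simps)
    have fp: "f p - f xs - inner (gradf xs) (t *\<^sub>R d) \<le> L/2 * (norm (t *\<^sub>R d))\<^sup>2"
      using abs_le_D1[OF descent_bound[OF grad smooth, where v=p and u=xs]] by (simp add: pe)
    have fp': "f p - f xs - t * inner (gradf xs) d \<le> L/2 * (t^2 * (norm d)\<^sup>2)"
      using fp t by (simp add: power_mult_distrib)
    have m: "f xs + g xs \<le> f p + g p" by (rule xs_min[OF pD])
    have "t * (- (L/2 * (t * (norm d)\<^sup>2))) \<le> t * (g u - g xs + inner (gradf xs) d)"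
      using fp' m gp by (simp add: algebra_simps power2_eq_square)
    then have "- (L/2 * (t * (norm d)\<^sup>2)) \<le> g u - g xs + inner (gradf xs) d"
      by (rule mult_left_le_imp_le) (use t in simp)
    then show ?thesis by (simp add: I_g_def d_def inner_minus_left mult.left_commute)
  qed
  then show ?thesis by (rule limit_le)
qed

lemma parallelogram_mid:
  fixes v x y :: "'a::real_inner"
  shows "(norm (v - ((1/2) *\<^sub>R x + (1/2) *\<^sub>R y)))\<^sup>2
       = ((norm (v - x))\<^sup>2 + (norm (v - y))\<^sup>2) / 2 - (norm (x - y))\<^sup>2 / 4"
  unfolding power2_norm_eq_inner
  by (simp add: inner_diff_left inner_diff_right inner_add_left inner_add_right inner_commute field_simps)

lemma aux_mid:
  fixes m c A B C gx gy :: real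
  assumes "m \<le> (gx + gy) / 2 + c * ((B + C) / 2 - A / 4)"
  shows "1 / 4 * c * A \<le> ((gx + c * B) + (gy + c * C)) / 2 - m"
  using assms by argo

lemma prox_exists:
  fixes g :: "'a::{real_inner, complete_space} \<Rightarrow> real"
  assumes g_prop: "proper_convex_lsc D g"
    and lb: "\<And>w. w \<in> D \<Longrightarrow> c0 + inner a0 w \<le> g w"
    and gam: "0 < \<gamma>"
  shows "\<exists>z. z \<in> D \<and> (\<forall>w\<in>D. g z + 1 / (2 * \<gamma>) * (norm (v - z))\<^sup>2 \<le> g w + 1 / (2 * \<gamma>) * (norm (v - w))\<^sup>2)"
proof -
  have cvx: "convex_on D g" and ne: "D \<noteq> {}" and cl: "closed {(x, t). x \<in> D \<and> g x \<le> t}"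
    using g_prop by (auto simp: proper_convex_lsc_def)
  then have cD: "convex D" by (simp add: convex_on_def)
  define \<phi> where "\<phi> w = g w + 1 / (2 * \<gamma>) * (norm (v - w))\<^sup>2" for w
  define M0 where "M0 = c0 + inner a0 v - \<gamma>/2 * (norm a0)\<^sup>2"
  have bnd: "M0 \<le> \<phi> w" if w: "w \<in> D" for w
  proof -
    have sq: "0 \<le> (norm ((w - v) + \<gamma> *\<^sub>R a0))\<^sup>2" by simp
    have ex: "(norm ((w - v) + \<gamma> *\<^sub>R a0))\<^sup>2 = (norm (v - w))\<^sup>2 + 2 * \<gamma> * inner a0 (w - v) + \<gamma>^2 * (norm a0)\<^sup>2"
      unfolding power2_norm_eq_inner
      by (simp add: inner_diff_left inner_diff_right inner_add_left inner_add_right inner_commute algebra_simps power2_eq_square)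
    have "0 \<le> 1 / (2 * \<gamma>) * (norm (v - w))\<^sup>2 + inner a0 (w - v) + \<gamma>/2 * (norm a0)\<^sup>2"
    proof -
      have "0 \<le> 1 / (2 * \<gamma>) * (norm ((w - v) + \<gamma> *\<^sub>R a0))\<^sup>2" using gam by simp
      also have "\<dots> = 1 / (2 * \<gamma>) * (norm (v - w))\<^sup>2 + inner a0 (w - v) + \<gamma>/2 * (norm a0)\<^sup>2"
        unfolding ex using gam by (simp add: field_simps power2_eq_square)
      finally show ?thesis .
    qed
    moreover have "c0 + inner a0 w \<le> g w" by (rule lb[OF w])
    ultimately show ?thesis unfolding \<phi>_def M0_def by (simp add: inner_diff_right)
  qed
  define m where "m = Inf (\<phi> ` D)"
  have bdd: "bdd_below (\<phi> ` D)" unfolding bdd_below_def using bnd by auto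
  have mle: "m \<le> \<phi> w" if "w \<in> D" for w
    unfolding m_def using bdd that by (simp add: cInf_lower)
  have "\<exists>w. w \<in> D \<and> \<phi> w < m + inverse (real (Suc n))" for n
  proof -
    have "Inf (\<phi> ` D) < m + inverse (real (Suc n))" unfolding m_def by simp
    from cInf_lessD[OF _ this] ne show ?thesis by auto
  qed
  then obtain W where W: "\<And>n. W n \<in> D" "\<And>n. \<phi> (W n) < m + inverse (real (Suc n))"
    by metis
  have mid: "1 / (8 * \<gamma>) * (norm (x - y))\<^sup>2 \<le> (\<phi> x + \<phi> y) / 2 - m" if xy: "x \<in> D" "y \<in> D" for x y
  proof -
    define p where "p = (1 - 1/2) *\<^sub>R x + (1/2::real) *\<^sub>R y"
    have pD: "p \<in> D" using cD xy unfolding p_def by (simp add: convex_def)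
    have gp: "g p \<le> (1 - 1/2) * g x + (1/2) * g y" using convex_onD[OF cvx, of "1/2" x y] xy by (simp add: p_def)
    have np: "(norm (v - p))\<^sup>2 = ((norm (v - x))\<^sup>2 + (norm (v - y))\<^sup>2) / 2 - (norm (x - y))\<^sup>2 / 4"
      using parallelogram_mid[of v x y] by (simp add: p_def)
    define c where "c = 1 / (2 * \<gamma>)"
    have c8: "1 / (8 * \<gamma>) = c / 4" by (simp add: c_def)
    have "m \<le> g p + c * (norm (v - p))\<^sup>2" using mle[OF pD] by (simp add: \<phi>_def c_def)
    moreover have "g p \<le> (g x + g y) / 2" using gp by simp
    ultimately have "m \<le> (g x + g y) / 2 + c * (norm (v - p))\<^sup>2" by linarith
    then have "m \<le> (g x + g y) / 2 + c * (((norm (v - x))\<^sup>2 + (norm (v - y))\<^sup>2) / 2 - (norm (x - y))\<^sup>2 / 4)"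
      by (simp only: np)
    then have "1 / 4 * c * (norm (x - y))\<^sup>2 \<le> ((g x + c * (norm (v - x))\<^sup>2) + (g y + c * (norm (v - y))\<^sup>2)) / 2 - m"
      by (rule aux_mid)
    then show ?thesis unfolding c8 \<phi>_def c_def[symmetric] by simp
  qed
  have cau: "Cauchy W"
  proof (rule CauchyI)
    fix e :: real assume e: "0 < e"
    obtain N :: nat where N: "8 * \<gamma> / e^2 < real N" using reals_Archimedean2 by blast
    have Nbound: "8 * \<gamma> * inverse (real (Suc N)) < e^2"
    proof -
      have "8 * \<gamma> < e^2 * real N" using N e by (simp add: field_simps)
      also have "\<dots> < e^2 * real (Suc N)" using e by simp
      finally show ?thesis using e by (simp add: field_simps)
    qed
    show "\<exists>M. \<forall>m\<ge>M. \<forall>n\<ge>M. norm (W m - W n) < e"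
    proof (intro exI allI impI)
      fix i j assume ij: "N \<le> i" "N \<le> j"
      have ii: "inverse (real (Suc i)) \<le> inverse (real (Suc N))" using ij by (simp add: field_simps)
      have jj: "inverse (real (Suc j)) \<le> inverse (real (Suc N))" using ij by (simp add: field_simps)
      have "1 / (8 * \<gamma>) * (norm (W i - W j))\<^sup>2 \<le> (\<phi> (W i) + \<phi> (W j)) / 2 - m"
        by (rule mid[OF W(1) W(1)])
      also have "\<dots> < inverse (real (Suc N))" using W(2)[of i] W(2)[of j] ii jj by argo
      finally have "(norm (W i - W j))\<^sup>2 < 8 * \<gamma> * inverse (real (Suc N))" using gam by (simp add: field_simps)
      also have "\<dots> < e^2" by (rule Nbound)
      finally have "(norm (W i - W j))\<^sup>2 < e^2" .
      then show "norm (W i - W j) < e" using e by (simp add: power_less_imp_less_base)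
    qed
  qed
  then obtain z where z: "W \<longlonglongrightarrow> z" using Cauchy_convergent_iff convergent_def by blast
  define T where "T n = m + inverse (real (Suc n)) - 1 / (2 * \<gamma>) * (norm (v - W n))\<^sup>2" for n
  have inS: "(W n, T n) \<in> {(x, t). x \<in> D \<and> g x \<le> t}" for n
    using W(1)[of n] W(2)[of n] unfolding T_def \<phi>_def by auto
  have lim: "(\<lambda>n. (W n, T n)) \<longlonglongrightarrow> (z, m + 0 - 1 / (2 * \<gamma>) * (norm (v - z))\<^sup>2)"
    unfolding T_def
    by (intro tendsto_intros z LIMSEQ_inverse_real_of_nat)
  have "(z, m + 0 - 1 / (2 * \<gamma>) * (norm (v - z))\<^sup>2) \<in> {(x, t). x \<in> D \<and> g x \<le> t}"
    by (rule closed_sequentially[OF cl inS lim])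
  then have zD: "z \<in> D" and gz: "g z \<le> m - 1 / (2 * \<gamma>) * (norm (v - z))\<^sup>2" by auto
  have "\<phi> z \<le> \<phi> w" if "w \<in> D" for w
    using gz mle[OF that] unfolding \<phi>_def by simp
  then show ?thesis using zD unfolding \<phi>_def by blast
qed

lemma aux_prox:
  fixes gz gw gp Nz Np Nwz Iz t c :: real
  assumes "gz + c * Nz \<le> gp + c * Np" "gp \<le> (1 - t) * gz + t * gw"
    "Np = Nz - 2 * t * Iz + t^2 * Nwz" "0 < t"
  shows "gw - gz - 2 * c * Iz \<ge> 0 - t * (c * Nwz)"
proof -
  have "t * (gw - gz - 2 * c * Iz) \<ge> t * (0 - t * (c * Nwz))"
    using assms(1,2,3) by (simp add: algebra_simps power2_eq_square)
  then show ?thesis using assms(4) by (rule mult_left_le_imp_le)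
qed

lemma prox_char:
  fixes g :: "'a::{real_inner, complete_space} \<Rightarrow> real"
  assumes g_prop: "proper_convex_lsc D g"
    and lb: "\<And>w. w \<in> D \<Longrightarrow> c0 + inner a0 w \<le> g w"
    and gam: "0 < \<gamma>"
  shows "prox D g \<gamma> v \<in> D"
    and "\<And>w. w \<in> D \<Longrightarrow> 0 \<le> I_g g w (prox D g \<gamma> v) ((1/\<gamma>) *\<^sub>R (v - prox D g \<gamma> v))"
proof -
  define z where "z = prox D g \<gamma> v"
  have cvx: "convex_on D g" using g_prop by (simp add: proper_convex_lsc_def)
  then have cD: "convex D" by (simp add: convex_on_def)
  have P: "z \<in> D \<and> (\<forall>w\<in>D. g z + 1 / (2 * \<gamma>) * (norm (v - z))\<^sup>2 \<le> g w + 1 / (2 * \<gamma>) * (norm (v - w))\<^sup>2)"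
    unfolding z_def prox_def by (rule someI_ex[OF prox_exists[OF g_prop lb gam]])
  then show "prox D g \<gamma> v \<in> D" by (simp add: z_def)
  fix w assume w: "w \<in> D"
  define c where "c = 1 / (2 * \<gamma>)"
  have "0 - t * (c * (norm (w - z))\<^sup>2) \<le> I_g g w z ((1/\<gamma>) *\<^sub>R (v - z))" if t: "0 < t" "t \<le> 1" for t
  proof -
    define p where "p = (1 - t) *\<^sub>R z + t *\<^sub>R w"
    have pD: "p \<in> D" using cD P w t unfolding p_def by (simp add: convex_def)
    have gp: "g p \<le> (1 - t) * g z + t * g w" using convex_onD[OF cvx, of t z w] t P w by (simp add: p_def)
    have m: "g z + c * (norm (v - z))\<^sup>2 \<le> g p + c * (norm (v - p))\<^sup>2" using P pD by (simp add: c_def)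
    have vp: "v - p = (v - z) - t *\<^sub>R (w - z)" by (simp add: p_def algebra_simps)
    have np: "(norm (v - p))\<^sup>2 = (norm (v - z))\<^sup>2 - 2 * t * inner (v - z) (w - z) + t^2 * (norm (w - z))\<^sup>2"
      unfolding vp power2_norm_eq_inner
      by (simp add: inner_diff_left inner_diff_right inner_commute algebra_simps power2_eq_square)
    have "g w - g z - 2 * c * inner (v - z) (w - z) \<ge> 0 - t * (c * (norm (w - z))\<^sup>2)"
      by (rule aux_prox[OF m gp np t(1)])
    moreover have "2 * c = 1 / \<gamma>" by (simp add: c_def)
    ultimately show ?thesis by (simp add: I_g_def)
  qed
  then have "0 \<le> I_g g w z ((1/\<gamma>) *\<^sub>R (v - z))" by (rule limit_le)
  then show "0 \<le> I_g g w (prox D g \<gamma> v) ((1/\<gamma>) *\<^sub>R (v - prox D g \<gamma> v))" by (simp add: z_def)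
qed

lemma If_scaled:
  fixes a b A B GA GB :: "'a::real_inner"
  assumes a: "a = k *\<^sub>R A" and b: "b = k *\<^sub>R B" and ga: "gf a = (L*k) *\<^sub>R GA" and gb: "gf b = (L*k) *\<^sub>R GB"
    and mu: "\<mu> = s^2 * L" and Lmu: "L - \<mu> = L * k" and nz: "L * k \<noteq> 0"
  shows "I_f f gf \<mu> L a b = (f a - f b - L*k^2 * inner (GB) (A - (B))
     - s^2*L*k^2/2 * (norm (A - (B)))^2
     - L*k/2 * (norm (GA - (GB) - s^2 *\<^sub>R (A - (B))))^2)"
proof -
  have ab: "a - b = k *\<^sub>R (A - B)" by (simp add: a b algebra_simps)
  have e: "gf a - gf b - \<mu> *\<^sub>R (a - b) = (L*k) *\<^sub>R (GA - GB - s^2 *\<^sub>R (A - B))"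
    unfolding ga gb ab mu by (simp add: algebra_simps)
  have n1: "(norm (gf a - gf b - \<mu> *\<^sub>R (a - b)))\<^sup>2 = (L*k)^2 * (norm (GA - GB - s^2 *\<^sub>R (A - B)))\<^sup>2"
    unfolding e by (simp add: power_mult_distrib)
  have n2: "(norm (a - b))\<^sup>2 = k^2 * (norm (A - B))\<^sup>2" unfolding ab by (simp add: power_mult_distrib)
  have c: "1 / (2 * (L - \<mu>)) * (L*k)^2 = L*k/2" unfolding Lmu using nz by (simp add: power2_eq_square)
  have "I_f f gf \<mu> L a b = f a - f b - inner (gf b) (a - b) - \<mu> / 2 * (norm (a - b))\<^sup>2
     - (1 / (2 * (L - \<mu>)) * (L*k)^2) * (norm (GA - GB - s^2 *\<^sub>R (A - B)))\<^sup>2"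
    unfolding I_f_def n1 by simp
  also have "\<dots> = f a - f b - L*k^2 * inner (GB) (A - (B))
     - s^2*L*k^2/2 * (norm (A - (B)))^2
     - L*k/2 * (norm (GA - (GB) - s^2 *\<^sub>R (A - (B))))^2"
    unfolding c n2 unfolding gb ab mu by (simp add: power2_eq_square)
  finally show ?thesis .
qed

lemma Ig_scaled:
  fixes a b A B SB :: "'a::real_inner"
  assumes a: "a = k *\<^sub>R A" and b: "b = k *\<^sub>R B" and sb: "sb = (L*k) *\<^sub>R SB"
  shows "I_g g a b sb = (g a - g b - L*k^2 * inner (SB) (A - (B)))"
proof -
  have ab: "a - b = k *\<^sub>R (A - B)" by (simp add: a b algebra_simps)
  show ?thesis unfolding I_g_def ab sb by (simp add: power2_eq_square)
qed




lemma sum_list_add2: "length xs = length ys \<Longrightarrow> sum_list xs + sum_list ys = sum_list (map2 (+) xs ys)" for xs ys :: "real list"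
  by (induction xs ys rule: list_induct2) auto
lemma length_map2_same: "length xs = length ys \<Longrightarrow> length (map2 f xs ys) = length xs"
  by simp
lemma map2_Cons2: "map2 f (x # xs) (y # ys) = f x y # map2 f xs ys" by simp
lemma map2_Nil2: "map2 f [] [] = []" by simp
lemma sum_list_cong2: "list_all2 (=) xs ys \<Longrightarrow> sum_list xs = sum_list (ys::real list)"
  by (simp add: list.rel_eq)
lemma list_all2_NilNil: "list_all2 P [] [] = True" by simp
lemma two_sum5: "2  *  ((a1::real) + a2 + a3 + a4 + a5) = 2 * a1 + 2 * a2 + 2 * a3 + 2 * a4 + 2 * a5" by simp
lemma two_sum14: "2  *  ((a1::real) + a2 + a3 + a4 + a5 + a6 + a7 + a8 + a9 + a10 + a11 + a12 + a13 + a14)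
  = 2 * a1 + 2 * a2 + 2 * a3 + 2 * a4 + 2 * a5 + 2 * a6 + 2 * a7 + 2 * a8 + 2 * a9 + 2 * a10 + 2 * a11 + 2 * a12 + 2 * a13 + 2 * a14" by simp

lemma poly_identity:
  fixes Y0 U0 T1 Z1 W1 T2 Xs Us Y1 Z2 :: "'a::real_inner"
  assumes k: "k = (1-s) * (1+s)"
  shows "(1-s)^2 * (1-s^2)  *  (F0 - Fs - L * k^2  *  inner (Us) (Y0 - (Xs)) - s^2 * L * k^2/2  *  (norm (Y0 - (Xs)))^2 - L * k/2  *  (norm (U0 - (Us) - s^2 *\<^sub>R (Y0 - (Xs))))^2) + (1-s)^2 * s^2  *  (Gs - G1 - L * k^2  *  inner (T1) (Xs - (Z1))) + (1-s)^2 * (s * (s-1))  *  (G1 - Gs - L * k^2  *  inner (- Us) (Z1 - (Xs))) + (1-s)^2 * 1  *  (L * k^2/2  *  (norm (T1 - - Us))^2) + (1-s)^2 * 1  *  (s^2 * L * k^2  *  (norm (Z1 - Xs))^2) = (1-s^2)  *  (F1 - Fs - L * k^2  *  inner (Us) (Y1 - (Xs)) - s^2 * L * k^2/2  *  (norm (Y1 - (Xs)))^2 - L * k/2  *  (norm (W1 - (Us) - s^2 *\<^sub>R (Y1 - (Xs))))^2) + s^2  *  (Gs - G2 - L * k^2  *  inner (T2) (Xs - (Z2))) + (s * (s-1))  *  (G2 - Gs - L * k^2  *  inner (- Us) (Z2 - (Xs))) + 1  *  (L * k^2/2  *  (norm (T2 - - Us))^2) + 1  *  (s^2 * L * k^2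  *  (norm (Z2 - Xs))^2) + (1-s)^2 * (1-s^2)  *  (F0 - F1 - L * k^2  *  inner (W1) (Y0 - (Y1)) - s^2 * L * k^2/2  *  (norm (Y0 - (Y1)))^2 - L * k/2  *  (norm (U0 - (W1) - s^2 *\<^sub>R (Y0 - (Y1))))^2) + (1-s^2) * (2 * s-s^2)  *  (Fs - F1 - L * k^2  *  inner (W1) (Xs - (Y1)) - s^2 * L * k^2/2  *  (norm (Xs - (Y1)))^2 - L * k/2  *  (norm (Us - (W1) - s^2 *\<^sub>R (Xs - (Y1))))^2) + (1-s)^2 * s  *  (G2 - G1 - L * k^2  *  inner (T1) (Z2 - (Z1))) + (2 * s-s^2) * (1+s)  *  (G2 - Gs - L * k^2  *  inner (- Us) (Z2 - (Xs))) + (2 * s-s^2)  *  (Gs - G2 - L * k^2  *  inner (T2) (Xs - (Z2))) + (2 * s-s^2)  *  (L * k^2/2  *  (norm (T2 - - Us))^2) + (1-s)^2  *  (L * k^2/2  *  (norm (T1 - T2))^2) + L  *  (inner ((1+s) *\<^sub>R Y1 - (2 * s) *\<^sub>R Z1 - (1-s) *\<^sub>R (Y0 - U0 - T1)) ((1 - s - 2 * s^2 + 2 * s^3 + s^4 - s^5) *\<^sub>R Us + (s^2 - 2 * s^3 + 2 * s^5 - s^6) *\<^sub>R ((1+s) *\<^sub>R Y1 - (2 * s) *\<^sub>R Z1 - (1-s) *\<^sub>R (Y0 - U0 - T1)) + (2 * s^3 - 4 * s^4 + 4 * s^6 - 2 * s^7) *\<^sub>R Z1 + (s^2 - 3 *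 s^3 + 2 * s^4 + 2 * s^5 - 3 * s^6 + s^7) *\<^sub>R Y0 + (- 1 * s^2 + 3 * s^3 - 2 * s^4 - 2 * s^5 + 3 * s^6 - s^7) *\<^sub>R U0 + (- 1 * s^2 + 3 * s^3 - 2 * s^4 - 2 * s^5 + 3 * s^6 - s^7) *\<^sub>R T1 + (- 1 * s^2 + s^3 + 2 * s^4 - 2 * s^5 - s^6 + s^7) *\<^sub>R Xs + (- 1 + s + 2 * s^2 - 2 * s^3 - s^4 + s^5) *\<^sub>R W1 + (- 2 * s^2 + 2 * s^3 + 2 * s^4 - 2 * s^5) *\<^sub>R (s *\<^sub>R Z2 - (s * (1-s)) *\<^sub>R Z1 - (s^2) *\<^sub>R Y1 + W1 + T2))) + L  *  (inner (s *\<^sub>R Z2 - (s * (1-s)) *\<^sub>R Z1 - (s^2) *\<^sub>R Y1 + W1 + T2) ((- 1 - 2 * s + 3 * s^2 + 4 * s^3 - 3 * s^4 - 2 * s^5 + s^6) *\<^sub>R Us + (- 1 + 2 * s^2 - s^4) *\<^sub>R (s *\<^sub>R Z2 - (s * (1-s)) *\<^sub>R Z1 - (s^2) *\<^sub>R Y1 + W1 + T2) + (- 2 * s + 2 * s^2 + 2 * s^5 - 2 * s^6) *\<^sub>R Z1 + (- 2 * s^2 + 4 * s^3 - 4 * s^5 + 2 * s^6) *\<^sub>R Y0 + (2 * s^2 - 4 * s^3 + 4 * s^5 - 2 * s^6) *\<^sub>R U0 + (1 - 2 * s + s^2 - s^4 + 2 * s^5 - s^6) *\<^sub>R T1 + (2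 - 4 * s^2 + 2 * s^4) *\<^sub>R W1 + (2 * s - 4 * s^3 + 2 * s^5) *\<^sub>R Xs))"
proof -
  have e0: "2  *  ((1-s)^2 * (1-s^2)  *  (F0 - Fs - L * k^2  *  inner (Us) (Y0 - (Xs)) - s^2 * L * k^2/2  *  (norm (Y0 - (Xs)))^2 - L * k/2  *  (norm (U0 - (Us) - s^2 *\<^sub>R (Y0 - (Xs))))^2)) = sum_list [(2  *  F0 - 4  *  (s  *  F0) + 4  *  (s^3  *  F0) - 2  *  (s^4  *  F0)), 0, (- 2  *  Fs + 4  *  (s  *  Fs) - 4  *  (s^3  *  Fs) + 2  *  (s^4  *  Fs)), 0, 0, 0, 0, 0, 0, 0, 0, 0, 0, 0, 0, 0, (- 1  *  (L  *  inner U0 U0) + 2  *  (s  *  (L  *  inner U0 U0)) + 1  *  (s^2  *  (L  *  inner U0 U0)) - 4  *  (s^3  *  (L  *  inner U0 U0)) + 1  *  (s^4  *  (L  *  inner U0 U0)) + 2  *  (s^5  *  (L  *  inner U0 U0)) - 1  *  (s^6  *  (L  *  inner U0 U0))), (2  *  (L  *  inner U0 Us) - 4  *  (s  *  (L  *  inner U0 Us)) - 2  *  (s^2  *  (L  *  inner U0 Us)) + 8  *  (s^3  *  (L  *  inner U0 Us)) - 2  *  (s^4  *  (L  *  inner U0 Us)) - 4  *  (s^5  *  (L  *  inner U0 Us)) + 2  *  (s^6  *  (L  *  inner U0 Us))), 0, (- 2  *  (s^2  *  (L  *  inner U0 Xs)) + 4  *  (s^3  *  (L  *  inner U0 Xs))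 + 2  *  (s^4  *  (L  *  inner U0 Xs)) - 8  *  (s^5  *  (L  *  inner U0 Xs)) + 2  *  (s^6  *  (L  *  inner U0 Xs)) + 4  *  (s^7  *  (L  *  inner U0 Xs)) - 2  *  (s^8  *  (L  *  inner U0 Xs))), 0, 0, 0, 0, (- 1  *  (L  *  inner Us Us) + 2  *  (s  *  (L  *  inner Us Us)) + 1  *  (s^2  *  (L  *  inner Us Us)) - 4  *  (s^3  *  (L  *  inner Us Us)) + 1  *  (s^4  *  (L  *  inner Us Us)) + 2  *  (s^5  *  (L  *  inner Us Us)) - 1  *  (s^6  *  (L  *  inner Us Us))), 0, 0, 0, 0, 0, (2  *  (L  *  inner Xs Us) - 4  *  (s  *  (L  *  inner Xs Us)) - 2  *  (s^2  *  (L  *  inner Xs Us)) + 8  *  (s^3  *  (L  *  inner Xs Us)) - 2  *  (s^4  *  (L  *  inner Xs Us)) - 4  *  (s^5  *  (L  *  inner Xs Us)) + 2  *  (s^6  *  (L  *  inner Xs Us))), 0, (- 1  *  (s^2  *  (L  *  inner Xs Xs)) + 2  *  (s^3  *  (L  *  inner Xs Xs)) + 1  *  (s^4  *  (L  *  inner Xs Xs)) - 4  *  (s^5  *  (L  *  inner Xs Xs)) + 1  *  (s^6  *  (L  *  inner Xs Xs)) + 2  *  (s^7  *  (L  *  inner Xs Xs)) - 1  *  (s^8  *  (L  *  inner Xs Xs))), 0, 0, 0, (2  *  (s^2  *  (L  *  inner Y0 U0)) - 4  *  (s^3  *  (L  *  inner Y0 U0)) - 2  *  (s^4  *  (L  *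  inner Y0 U0)) + 8  *  (s^5  *  (L  *  inner Y0 U0)) - 2  *  (s^6  *  (L  *  inner Y0 U0)) - 4  *  (s^7  *  (L  *  inner Y0 U0)) + 2  *  (s^8  *  (L  *  inner Y0 U0))), (- 2  *  (L  *  inner Y0 Us) + 4  *  (s  *  (L  *  inner Y0 Us)) + 2  *  (s^2  *  (L  *  inner Y0 Us)) - 8  *  (s^3  *  (L  *  inner Y0 Us)) + 2  *  (s^4  *  (L  *  inner Y0 Us)) + 4  *  (s^5  *  (L  *  inner Y0 Us)) - 2  *  (s^6  *  (L  *  inner Y0 Us))), 0, (2  *  (s^2  *  (L  *  inner Y0 Xs)) - 4  *  (s^3  *  (L  *  inner Y0 Xs)) - 2  *  (s^4  *  (L  *  inner Y0 Xs)) + 8  *  (s^5  *  (L  *  inner Y0 Xs)) - 2  *  (s^6  *  (L  *  inner Y0 Xs)) - 4  *  (s^7  *  (L  *  inner Y0 Xs)) + 2  *  (s^8  *  (L  *  inner Y0 Xs))), (- 1  *  (s^2  *  (L  *  inner Y0 Y0)) + 2  *  (s^3  *  (L  *  inner Y0 Y0)) + 1  *  (s^4  *  (L  *  inner Y0 Y0)) - 4  *  (s^5  *  (L  *  inner Y0 Y0)) + 1  *  (s^6  *  (L  *  inner Y0 Y0)) + 2  *  (s^7  *  (L  *  inner Y0 Y0)) - 1  *  (s^8  *  (L  *  inner Y0 Y0))), 0, 0, 0, 0, 0, 0, 0, 0, 0, 0, 0, 0, 0, 0, 0, 0]"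
    unfolding k power2_norm_eq_inner sum_list_simps
    apply ((simp only: inner_simps inner_minus_left inner_minus_right inner_commute)?)
    by (simp add: divide_simps; algebra)
  have e1: "2  *  ((1-s)^2 * s^2  *  (Gs - G1 - L * k^2  *  inner (T1) (Xs - (Z1)))) = sum_list [0, 0, 0, (- 2  *  (s^2  *  G1) + 4  *  (s^3  *  G1) - 2  *  (s^4  *  G1)), 0, (2  *  (s^2  *  Gs) - 4  *  (s^3  *  Gs) + 2  *  (s^4  *  Gs)), 0, 0, 0, 0, (- 2  *  (s^2  *  (L  *  inner T1 Xs)) + 4  *  (s^3  *  (L  *  inner T1 Xs)) + 2  *  (s^4  *  (L  *  inner T1 Xs)) - 8  *  (s^5  *  (L  *  inner T1 Xs)) + 2  *  (s^6  *  (L  *  inner T1 Xs)) + 4  *  (s^7  *  (L  *  inner T1 Xs)) - 2  *  (s^8  *  (L  *  inner T1 Xs))), 0, (2  *  (s^2  *  (L  *  inner T1 Z1)) - 4  *  (s^3  *  (L  *  inner T1 Z1)) - 2  *  (s^4  *  (L  *  inner T1 Z1)) + 8  *  (s^5  *  (L  *  inner T1 Z1)) - 2  *  (s^6  *  (L  *  inner T1 Z1)) - 4  *  (s^7  *  (L  *  inner T1 Z1)) + 2  *  (s^8  *  (L  *  inner T1 Z1))), 0, 0, 0, 0, 0, 0, 0, 0, 0, 0, 0, 0, 0, 0, 0, 0, 0, 0, 0, 0, 0, 0, 0, 0, 0, 0, 0, 0, 0, 0, 0, 0, 0, 0, 0, 0, 0, 0, 0, 0, 0, 0, 0, 0]"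
    unfolding k power2_norm_eq_inner sum_list_simps
    apply ((simp only: inner_simps inner_minus_left inner_minus_right inner_commute)?)
    by (simp add: divide_simps; algebra)
  have e2: "2  *  ((1-s)^2 * (s * (s-1))  *  (G1 - Gs - L * k^2  *  inner (- Us) (Z1 - (Xs)))) = sum_list [0, 0, 0, (- 2  *  (s  *  G1) + 6  *  (s^2  *  G1) - 6  *  (s^3  *  G1) + 2  *  (s^4  *  G1)), 0, (2  *  (s  *  Gs) - 6  *  (s^2  *  Gs) + 6  *  (s^3  *  Gs) - 2  *  (s^4  *  Gs)), 0, 0, 0, 0, 0, 0, 0, 0, 0, 0, 0, 0, 0, 0, 0, 0, 0, 0, 0, 0, 0, 0, 0, 0, (2  *  (s  *  (L  *  inner Xs Us)) - 6  *  (s^2  *  (L  *  inner Xs Us)) + 2  *  (s^3  *  (L  *  inner Xs Us)) + 10  *  (s^4  *  (L  *  inner Xs Us)) - 10  *  (s^5  *  (L  *  inner Xs Us)) - 2  *  (s^6  *  (L  *  inner Xs Us)) + 6  *  (s^7  *  (L  *  inner Xs Us)) - 2  *  (s^8  *  (L  *  inner Xs Us))), 0, 0, 0, 0, 0, 0, 0, 0, 0, 0, 0, 0, 0, 0, 0, 0, 0, 0, (- 2  *  (s  *  (L  *  inner Z1 Us)) + 6  *  (s^2  *  (L  *  inner Z1 Us)) - 2  *  (s^3  *  (L  *  inner Z1 Us)) - 10  *  (s^4  *  (L  *  inner Z1 Us)) + 10  *  (s^5  *  (L  *  inner Z1 Us)) + 2  *  (s^6  *  (L  *  inner Z1 Us))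 - 6  *  (s^7  *  (L  *  inner Z1 Us)) + 2  *  (s^8  *  (L  *  inner Z1 Us))), 0, 0, 0, 0, 0, 0, 0]"
    unfolding k power2_norm_eq_inner sum_list_simps
    apply ((simp only: inner_simps inner_minus_left inner_minus_right inner_commute)?)
    by (simp add: divide_simps; algebra)
  have e3: "2  *  ((1-s)^2 * 1  *  (L * k^2/2  *  (norm (T1 - - Us))^2)) = sum_list [0, 0, 0, 0, 0, 0, (1  *  (L  *  inner T1 T1) - 2  *  (s  *  (L  *  inner T1 T1)) - 1  *  (s^2  *  (L  *  inner T1 T1)) + 4  *  (s^3  *  (L  *  inner T1 T1)) - 1  *  (s^4  *  (L  *  inner T1 T1)) - 2  *  (s^5  *  (L  *  inner T1 T1)) + 1  *  (s^6  *  (L  *  inner T1 T1))), 0, (2  *  (L  *  inner T1 Us) - 4  *  (s  *  (L  *  inner T1 Us)) - 2  *  (s^2  *  (L  *  inner T1 Us)) + 8  *  (s^3  *  (L  *  inner T1 Us)) - 2  *  (s^4  *  (L  *  inner T1 Us)) - 4  *  (s^5  *  (L  *  inner T1 Us)) + 2  *  (s^6  *  (L  *  inner T1 Us))), 0, 0, 0, 0, 0, 0, 0, 0, 0, 0, 0, 0, 0, 0, 0, (1  *  (L  *  inner Us Us) - 2  *  (s  *  (L  *  inner Us Us)) - 1  *  (s^2  *  (L  *  inner Us Us)) + 4  *  (s^3  *  (L  *  inner Us Us)) - 1  *  (s^4  *  (L  *  inner Us Us)) - 2  *  (s^5  *  (L  *  inner Us Us)) + 1  *  (s^6  *  (L  *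  inner Us Us))), 0, 0, 0, 0, 0, 0, 0, 0, 0, 0, 0, 0, 0, 0, 0, 0, 0, 0, 0, 0, 0, 0, 0, 0, 0, 0, 0, 0, 0, 0, 0, 0]"
    unfolding k power2_norm_eq_inner sum_list_simps
    apply ((simp only: inner_simps inner_minus_left inner_minus_right inner_commute)?)
    by (simp add: divide_simps; algebra)
  have e4: "2  *  ((1-s)^2 * 1  *  (s^2 * L * k^2  *  (norm (Z1 - Xs))^2)) = sum_list [0, 0, 0, 0, 0, 0, 0, 0, 0, 0, 0, 0, 0, 0, 0, 0, 0, 0, 0, 0, 0, 0, 0, 0, 0, 0, 0, 0, 0, 0, 0, 0, (2  *  (s^2  *  (L  *  inner Xs Xs)) - 4  *  (s^3  *  (L  *  inner Xs Xs)) - 2  *  (s^4  *  (L  *  inner Xs Xs)) + 8  *  (s^5  *  (L  *  inner Xs Xs)) - 2  *  (s^6  *  (L  *  inner Xs Xs)) - 4  *  (s^7  *  (L  *  inner Xs Xs)) + 2  *  (s^8  *  (L  *  inner Xs Xs))), 0, 0, 0, 0, 0, 0, 0, 0, 0, 0, 0, 0, 0, 0, 0, 0, 0, 0, (- 4  *  (s^2  *  (L  *  inner Z1 Xs)) + 8  *  (s^3  *  (L  *  inner Z1 Xs)) + 4  *  (s^4  *  (L  *  inner Z1 Xs)) - 16  *  (s^5  *  (L  *  inner Z1 Xs)) + 4  *  (s^6  *  (L  *  inner Z1 Xs)) + 8  *  (s^7  *  (L  *  inner Z1 Xs)) - 4  *  (s^8  *  (L  *  inner Z1 Xs))), 0,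 (2  *  (s^2  *  (L  *  inner Z1 Z1)) - 4  *  (s^3  *  (L  *  inner Z1 Z1)) - 2  *  (s^4  *  (L  *  inner Z1 Z1)) + 8  *  (s^5  *  (L  *  inner Z1 Z1)) - 2  *  (s^6  *  (L  *  inner Z1 Z1)) - 4  *  (s^7  *  (L  *  inner Z1 Z1)) + 2  *  (s^8  *  (L  *  inner Z1 Z1))), 0, 0, 0]"
    unfolding k power2_norm_eq_inner sum_list_simps
    apply ((simp only: inner_simps inner_minus_left inner_minus_right inner_commute)?)
    by (simp add: divide_simps; algebra)
  have e5: "2  *  ((1-s^2)  *  (F1 - Fs - L * k^2  *  inner (Us) (Y1 - (Xs)) - s^2 * L * k^2/2  *  (norm (Y1 - (Xs)))^2 - L * k/2  *  (norm (W1 - (Us) - s^2 *\<^sub>R (Y1 - (Xs))))^2)) = sum_list [0, (2  *  F1 - 2  *  (s^2  *  F1)), (- 2  *  Fs + 2  *  (s^2  *  Fs)), 0, 0, 0, 0, 0, 0, 0, 0, 0, 0, 0, 0, 0, 0, 0, 0, 0, 0, 0, 0, 0, (- 1  *  (L  *  inner Us Us) + 2  *  (s^2  *  (L  *  inner Us Us)) - 1  *  (s^4  *  (L  *  inner Us Us))), (2  *  (L  *  inner Us W1) - 4  *  (s^2  *  (L  *  inner Us W1)) + 2  *  (s^4  *  (L  *  inner Us W1))), (- 2  *  (L  *  inner Us Y1) + 4  *  (s^2  *  (L  *  inner Us Y1)) - 2  *  (s^4  *  (L  *  inner Us Y1))), 0, (- 1  *  (L  *  inner W1 W1) + 2  *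  (s^2  *  (L  *  inner W1 W1)) - 1  *  (s^4  *  (L  *  inner W1 W1))), 0, (2  *  (L  *  inner Xs Us) - 4  *  (s^2  *  (L  *  inner Xs Us)) + 2  *  (s^4  *  (L  *  inner Xs Us))), (- 2  *  (s^2  *  (L  *  inner Xs W1)) + 4  *  (s^4  *  (L  *  inner Xs W1)) - 2  *  (s^6  *  (L  *  inner Xs W1))), (- 1  *  (s^2  *  (L  *  inner Xs Xs)) + 2  *  (s^4  *  (L  *  inner Xs Xs)) - 1  *  (s^6  *  (L  *  inner Xs Xs))), (2  *  (s^2  *  (L  *  inner Xs Y1)) - 4  *  (s^4  *  (L  *  inner Xs Y1)) + 2  *  (s^6  *  (L  *  inner Xs Y1))), 0, 0, 0, 0, 0, 0, 0, 0, 0, 0, 0, (2  *  (s^2  *  (L  *  inner Y1 W1)) - 4  *  (s^4  *  (L  *  inner Y1 W1)) + 2  *  (s^6  *  (L  *  inner Y1 W1))), (- 1  *  (s^2  *  (L  *  inner Y1 Y1)) + 2  *  (s^4  *  (L  *  inner Y1 Y1)) - 1  *  (s^6  *  (L  *  inner Y1 Y1))), 0, 0, 0, 0, 0, 0, 0, 0, 0, 0]"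
    unfolding k power2_norm_eq_inner sum_list_simps
    apply ((simp only: inner_simps inner_minus_left inner_minus_right inner_commute)?)
    by (simp add: divide_simps; algebra)
  have e6: "2  *  (s^2  *  (Gs - G2 - L * k^2  *  inner (T2) (Xs - (Z2)))) = sum_list [0, 0, 0, 0, (- 2  *  (s^2  *  G2)), (2  *  (s^2  *  Gs)), 0, 0, 0, 0, 0, 0, 0, 0, 0, 0, 0, 0, 0, 0, 0, 0, 0, 0, 0, 0, 0, 0, 0, (- 2  *  (s^2  *  (L  *  inner Xs T2)) + 4  *  (s^4  *  (L  *  inner Xs T2)) - 2  *  (s^6  *  (L  *  inner Xs T2))), 0, 0, 0, 0, 0, 0, 0, 0, 0, 0, 0, 0, 0, 0, 0, 0, 0, 0, 0, 0, 0, 0, 0, 0, 0, (2  *  (s^2  *  (L  *  inner Z2 T2)) - 4  *  (s^4  *  (L  *  inner Z2 T2)) + 2  *  (s^6  *  (L  *  inner Z2 T2))), 0]"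
    unfolding k power2_norm_eq_inner sum_list_simps
    apply ((simp only: inner_simps inner_minus_left inner_minus_right inner_commute)?)
    by (simp add: divide_simps; algebra)
  have e7: "2  *  ((s * (s-1))  *  (G2 - Gs - L * k^2  *  inner (- Us) (Z2 - (Xs)))) = sum_list [0, 0, 0, 0, (- 2  *  (s  *  G2) + 2  *  (s^2  *  G2)), (2  *  (s  *  Gs) - 2  *  (s^2  *  Gs)), 0, 0, 0, 0, 0, 0, 0, 0, 0, 0, 0, 0, 0, 0, 0, 0, 0, 0, 0, 0, 0, (- 2  *  (s  *  (L  *  inner Us Z2)) + 2  *  (s^2  *  (L  *  inner Us Z2)) + 4  *  (s^3  *  (L  *  inner Us Z2)) - 4  *  (s^4  *  (L  *  inner Us Z2)) - 2  *  (s^5  *  (L  *  inner Us Z2)) + 2  *  (s^6  *  (L  *  inner Us Z2))), 0, 0, (2  *  (s  *  (L  *  inner Xs Us)) - 2  *  (s^2  *  (L  *  inner Xs Us)) - 4  *  (s^3  *  (L  *  inner Xs Us)) + 4  *  (s^4  *  (L  *  inner Xs Us)) + 2  *  (s^5  *  (L  *  inner Xs Us)) - 2  *  (s^6  *  (L  *  inner Xs Us))), 0, 0, 0, 0, 0, 0, 0, 0, 0, 0, 0, 0, 0, 0, 0, 0, 0, 0, 0, 0, 0, 0, 0, 0, 0, 0]"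
    unfolding k power2_norm_eq_inner sum_list_simps
    apply ((simp only: inner_simps inner_minus_left inner_minus_right inner_commute)?)
    by (simp add: divide_simps; algebra)
  have e8: "2  *  (1  *  (L * k^2/2  *  (norm (T2 - - Us))^2)) = sum_list [0, 0, 0, 0, 0, 0, 0, 0, 0, 0, 0, 0, 0, 0, (1  *  (L  *  inner T2 T2) - 2  *  (s^2  *  (L  *  inner T2 T2)) + 1  *  (s^4  *  (L  *  inner T2 T2))), 0, 0, 0, 0, 0, 0, 0, 0, (2  *  (L  *  inner Us T2) - 4  *  (s^2  *  (L  *  inner Us T2)) + 2  *  (s^4  *  (L  *  inner Us T2))), (1  *  (L  *  inner Us Us) - 2  *  (s^2  *  (L  *  inner Us Us)) + 1  *  (s^4  *  (L  *  inner Us Us))), 0, 0, 0, 0, 0, 0, 0, 0, 0, 0, 0, 0, 0, 0, 0, 0, 0, 0, 0, 0, 0, 0, 0, 0, 0, 0, 0, 0, 0, 0, 0, 0]"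
    unfolding k power2_norm_eq_inner sum_list_simps
    apply ((simp only: inner_simps inner_minus_left inner_minus_right inner_commute)?)
    by (simp add: divide_simps; algebra)
  have e9: "2  *  (1  *  (s^2 * L * k^2  *  (norm (Z2 - Xs))^2)) = sum_list [0, 0, 0, 0, 0, 0, 0, 0, 0, 0, 0, 0, 0, 0, 0, 0, 0, 0, 0, 0, 0, 0, 0, 0, 0, 0, 0, 0, 0, 0, 0, 0, (2  *  (s^2  *  (L  *  inner Xs Xs)) - 4  *  (s^4  *  (L  *  inner Xs Xs)) + 2  *  (s^6  *  (L  *  inner Xs Xs))), 0, (- 4  *  (s^2  *  (L  *  inner Xs Z2)) + 8  *  (s^4  *  (L  *  inner Xs Z2)) - 4  *  (s^6  *  (L  *  inner Xs Z2))), 0, 0, 0, 0, 0, 0, 0, 0, 0, 0, 0, 0, 0, 0, 0, 0, 0, 0, 0, 0, 0, (2  *  (s^2  *  (L  *  inner Z2 Z2)) - 4  *  (s^4  *  (L  *  inner Z2 Z2)) + 2  *  (s^6  *  (L  *  inner Z2 Z2)))]"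
    unfolding k power2_norm_eq_inner sum_list_simps
    apply ((simp only: inner_simps inner_minus_left inner_minus_right inner_commute)?)
    by (simp add: divide_simps; algebra)
  have e10: "2  *  ((1-s)^2 * (1-s^2)  *  (F0 - F1 - L * k^2  *  inner (W1) (Y0 - (Y1)) - s^2 * L * k^2/2  *  (norm (Y0 - (Y1)))^2 - L * k/2  *  (norm (U0 - (W1) - s^2 *\<^sub>R (Y0 - (Y1))))^2)) = sum_list [(2  *  F0 - 4  *  (s  *  F0) + 4  *  (s^3  *  F0) - 2  *  (s^4  *  F0)), (- 2  *  F1 + 4  *  (s  *  F1) - 4  *  (s^3  *  F1) + 2  *  (s^4  *  F1)), 0, 0, 0, 0, 0, 0, 0, 0, 0, 0, 0, 0, 0, 0, (- 1  *  (L  *  inner U0 U0) + 2  *  (s  *  (L  *  inner U0 U0)) + 1  *  (s^2  *  (L  *  inner U0 U0)) - 4  *  (s^3  *  (L  *  inner U0 U0)) + 1  *  (s^4  *  (L  *  inner U0 U0)) + 2  *  (s^5  *  (L  *  inner U0 U0)) - 1  *  (s^6  *  (L  *  inner U0 U0))), 0, (2  *  (L  *  inner U0 W1) - 4  *  (s  *  (L  *  inner U0 W1)) - 2  *  (s^2  *  (L  *  inner U0 W1)) + 8  *  (s^3  *  (L  *  inner U0 W1)) - 2  *  (s^4  *  (L  *  inner U0 W1)) - 4  *  (s^5  *  (L  *  inner U0 W1)) + 2  *  (s^6  *  (L  *  inner U0 W1))), 0, (- 2  *  (s^2  *  (L  *  inner U0 Y1)) + 4  *  (s^3  *  (L  *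  inner U0 Y1)) + 2  *  (s^4  *  (L  *  inner U0 Y1)) - 8  *  (s^5  *  (L  *  inner U0 Y1)) + 2  *  (s^6  *  (L  *  inner U0 Y1)) + 4  *  (s^7  *  (L  *  inner U0 Y1)) - 2  *  (s^8  *  (L  *  inner U0 Y1))), 0, 0, 0, 0, 0, 0, 0, (- 1  *  (L  *  inner W1 W1) + 2  *  (s  *  (L  *  inner W1 W1)) + 1  *  (s^2  *  (L  *  inner W1 W1)) - 4  *  (s^3  *  (L  *  inner W1 W1)) + 1  *  (s^4  *  (L  *  inner W1 W1)) + 2  *  (s^5  *  (L  *  inner W1 W1)) - 1  *  (s^6  *  (L  *  inner W1 W1))), 0, 0, 0, 0, 0, 0, 0, (2  *  (s^2  *  (L  *  inner Y0 U0)) - 4  *  (s^3  *  (L  *  inner Y0 U0)) - 2  *  (s^4  *  (L  *  inner Y0 U0)) + 8  *  (s^5  *  (L  *  inner Y0 U0)) - 2  *  (s^6  *  (L  *  inner Y0 U0)) - 4  *  (s^7  *  (L  *  inner Y0 U0)) + 2  *  (s^8  *  (L  *  inner Y0 U0))), 0, (- 2  *  (L  *  inner Y0 W1) + 4  *  (s  *  (L  *  inner Y0 W1)) + 2  *  (s^2  *  (L  *  inner Y0 W1)) - 8  *  (s^3  *  (L  *  inner Y0 W1)) + 2  *  (s^4  *  (L  *  inner Y0 W1)) + 4  *  (s^5  *  (L  *  inner Y0 W1)) - 2  *  (s^6  *  (L  *  inner Y0 W1))), 0, (- 1  *  (s^2  *  (L  *  inner Y0 Y0)) + 2  *  (s^3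  *  (L  *  inner Y0 Y0)) + 1  *  (s^4  *  (L  *  inner Y0 Y0)) - 4  *  (s^5  *  (L  *  inner Y0 Y0)) + 1  *  (s^6  *  (L  *  inner Y0 Y0)) + 2  *  (s^7  *  (L  *  inner Y0 Y0)) - 1  *  (s^8  *  (L  *  inner Y0 Y0))), (2  *  (s^2  *  (L  *  inner Y0 Y1)) - 4  *  (s^3  *  (L  *  inner Y0 Y1)) - 2  *  (s^4  *  (L  *  inner Y0 Y1)) + 8  *  (s^5  *  (L  *  inner Y0 Y1)) - 2  *  (s^6  *  (L  *  inner Y0 Y1)) - 4  *  (s^7  *  (L  *  inner Y0 Y1)) + 2  *  (s^8  *  (L  *  inner Y0 Y1))), 0, 0, 0, (2  *  (L  *  inner Y1 W1) - 4  *  (s  *  (L  *  inner Y1 W1)) - 2  *  (s^2  *  (L  *  inner Y1 W1)) + 8  *  (s^3  *  (L  *  inner Y1 W1)) - 2  *  (s^4  *  (L  *  inner Y1 W1)) - 4  *  (s^5  *  (L  *  inner Y1 W1)) + 2  *  (s^6  *  (L  *  inner Y1 W1))), (- 1  *  (s^2  *  (L  *  inner Y1 Y1)) + 2  *  (s^3  *  (L  *  inner Y1 Y1)) + 1  *  (s^4  *  (L  *  inner Y1 Y1)) - 4  *  (s^5  *  (L  *  inner Y1 Y1)) + 1  *  (s^6  *  (L  *  inner Y1 Y1)) + 2  *  (s^7  *  (L  *  inner Y1 Y1)) - 1  *  (s^8  *  (L  *  inner Y1 Y1))), 0, 0, 0, 0, 0, 0, 0, 0, 0, 0]"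
    unfolding k power2_norm_eq_inner sum_list_simps
    apply ((simp only: inner_simps inner_minus_left inner_minus_right inner_commute)?)
    by (simp add: divide_simps; algebra)
  have e11: "2  *  ((1-s^2) * (2 * s-s^2)  *  (Fs - F1 - L * k^2  *  inner (W1) (Xs - (Y1)) - s^2 * L * k^2/2  *  (norm (Xs - (Y1)))^2 - L * k/2  *  (norm (Us - (W1) - s^2 *\<^sub>R (Xs - (Y1))))^2)) = sum_list [0, (- 4  *  (s  *  F1) + 2  *  (s^2  *  F1) + 4  *  (s^3  *  F1) - 2  *  (s^4  *  F1)), (4  *  (s  *  Fs) - 2  *  (s^2  *  Fs) - 4  *  (s^3  *  Fs) + 2  *  (s^4  *  Fs)), 0, 0, 0, 0, 0, 0, 0, 0, 0, 0, 0, 0, 0, 0, 0, 0, 0, 0, 0, 0, 0, (- 2  *  (s  *  (L  *  inner Us Us)) + 1  *  (s^2  *  (L  *  inner Us Us)) + 4  *  (s^3  *  (L  *  inner Us Us)) - 2  *  (s^4  *  (L  *  inner Us Us)) - 2  *  (s^5  *  (L  *  inner Us Us)) + 1  *  (s^6  *  (L  *  inner Us Us))), (4  *  (s  *  (L  *  inner Us W1)) - 2  *  (s^2  *  (L  *  inner Us W1)) - 8  *  (s^3  *  (L  *  inner Us W1)) + 4  *  (s^4  *  (L  *  inner Us W1)) + 4  *  (s^5  *  (L  *  inner Us W1)) - 2  *  (s^6  *  (L  *  inner Us W1))), (- 4  *  (s^3  *  (L  *  inner Us Y1)) + 2  *  (s^4  *  (L  *  inner Us Y1)) + 8  *  (s^5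  *  (L  *  inner Us Y1)) - 4  *  (s^6  *  (L  *  inner Us Y1)) - 4  *  (s^7  *  (L  *  inner Us Y1)) + 2  *  (s^8  *  (L  *  inner Us Y1))), 0, (- 2  *  (s  *  (L  *  inner W1 W1)) + 1  *  (s^2  *  (L  *  inner W1 W1)) + 4  *  (s^3  *  (L  *  inner W1 W1)) - 2  *  (s^4  *  (L  *  inner W1 W1)) - 2  *  (s^5  *  (L  *  inner W1 W1)) + 1  *  (s^6  *  (L  *  inner W1 W1))), 0, (4  *  (s^3  *  (L  *  inner Xs Us)) - 2  *  (s^4  *  (L  *  inner Xs Us)) - 8  *  (s^5  *  (L  *  inner Xs Us)) + 4  *  (s^6  *  (L  *  inner Xs Us)) + 4  *  (s^7  *  (L  *  inner Xs Us)) - 2  *  (s^8  *  (L  *  inner Xs Us))), (- 4  *  (s  *  (L  *  inner Xs W1)) + 2  *  (s^2  *  (L  *  inner Xs W1)) + 8  *  (s^3  *  (L  *  inner Xs W1)) - 4  *  (s^4  *  (L  *  inner Xs W1)) - 4  *  (s^5  *  (L  *  inner Xs W1)) + 2  *  (s^6  *  (L  *  inner Xs W1))), (- 2  *  (s^3  *  (L  *  inner Xs Xs)) + 1  *  (s^4  *  (L  *  inner Xs Xs)) + 4  *  (s^5  *  (L  *  inner Xs Xs)) - 2  *  (s^6  *  (L  *  inner Xs Xs)) - 2  *  (s^7  *  (L  *  inner Xs Xs)) + 1  *  (s^8  *  (L  *  inner Xs Xs))), (4  *  (s^3  *  (L  *  inner Xs Y1)) - 2  *  (s^4  *  (L  *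  inner Xs Y1)) - 8  *  (s^5  *  (L  *  inner Xs Y1)) + 4  *  (s^6  *  (L  *  inner Xs Y1)) + 4  *  (s^7  *  (L  *  inner Xs Y1)) - 2  *  (s^8  *  (L  *  inner Xs Y1))), 0, 0, 0, 0, 0, 0, 0, 0, 0, 0, 0, (4  *  (s  *  (L  *  inner Y1 W1)) - 2  *  (s^2  *  (L  *  inner Y1 W1)) - 8  *  (s^3  *  (L  *  inner Y1 W1)) + 4  *  (s^4  *  (L  *  inner Y1 W1)) + 4  *  (s^5  *  (L  *  inner Y1 W1)) - 2  *  (s^6  *  (L  *  inner Y1 W1))), (- 2  *  (s^3  *  (L  *  inner Y1 Y1)) + 1  *  (s^4  *  (L  *  inner Y1 Y1)) + 4  *  (s^5  *  (L  *  inner Y1 Y1)) - 2  *  (s^6  *  (L  *  inner Y1 Y1)) - 2  *  (s^7  *  (L  *  inner Y1 Y1)) + 1  *  (s^8  *  (L  *  inner Y1 Y1))), 0, 0, 0, 0, 0, 0, 0, 0, 0, 0]"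
    unfolding k power2_norm_eq_inner sum_list_simps
    apply ((simp only: inner_simps inner_minus_left inner_minus_right inner_commute)?)
    by (simp add: divide_simps; algebra)
  have e12: "2  *  ((1-s)^2 * s  *  (G2 - G1 - L * k^2  *  inner (T1) (Z2 - (Z1)))) = sum_list [0, 0, 0, (- 2  *  (s  *  G1) + 4  *  (s^2  *  G1) - 2  *  (s^3  *  G1)), (2  *  (s  *  G2) - 4  *  (s^2  *  G2) + 2  *  (s^3  *  G2)), 0, 0, 0, 0, 0, 0, 0, (2  *  (s  *  (L  *  inner T1 Z1)) - 4  *  (s^2  *  (L  *  inner T1 Z1)) - 2  *  (s^3  *  (L  *  inner T1 Z1)) + 8  *  (s^4  *  (L  *  inner T1 Z1)) - 2  *  (s^5  *  (L  *  inner T1 Z1)) - 4  *  (s^6  *  (L  *  inner T1 Z1)) + 2  *  (s^7  *  (L  *  inner T1 Z1))), (- 2  *  (s  *  (L  *  inner T1 Z2)) + 4  *  (s^2  *  (L  *  inner T1 Z2)) + 2  *  (s^3  *  (L  *  inner T1 Z2)) - 8  *  (s^4  *  (L  *  inner T1 Z2)) + 2  *  (s^5  *  (L  *  inner T1 Z2)) + 4  *  (s^6  *  (L  *  inner T1 Z2)) - 2  *  (s^7  *  (L  *  inner T1 Z2))), 0, 0, 0, 0, 0, 0, 0, 0, 0, 0, 0, 0, 0, 0, 0, 0, 0, 0, 0, 0, 0, 0, 0, 0, 0, 0, 0, 0, 0, 0, 0, 0, 0, 0, 0, 0, 0, 0, 0, 0, 0, 0, 0]"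
    unfolding k power2_norm_eq_inner sum_list_simps
    apply ((simp only: inner_simps inner_minus_left inner_minus_right inner_commute)?)
    by (simp add: divide_simps; algebra)
  have e13: "2  *  ((2 * s-s^2) * (1+s)  *  (G2 - Gs - L * k^2  *  inner (- Us) (Z2 - (Xs)))) = sum_list [0, 0, 0, 0, (4  *  (s  *  G2) + 2  *  (s^2  *  G2) - 2  *  (s^3  *  G2)), (- 4  *  (s  *  Gs) - 2  *  (s^2  *  Gs) + 2  *  (s^3  *  Gs)), 0, 0, 0, 0, 0, 0, 0, 0, 0, 0, 0, 0, 0, 0, 0, 0, 0, 0, 0, 0, 0, (4  *  (s  *  (L  *  inner Us Z2)) + 2  *  (s^2  *  (L  *  inner Us Z2)) - 10  *  (s^3  *  (L  *  inner Us Z2)) - 4  *  (s^4  *  (L  *  inner Us Z2)) + 8  *  (s^5  *  (L  *  inner Us Z2)) + 2  *  (s^6  *  (L  *  inner Us Z2)) - 2  *  (s^7  *  (L  *  inner Us Z2))), 0, 0, (- 4  *  (s  *  (L  *  inner Xs Us)) - 2  *  (s^2  *  (L  *  inner Xs Us)) + 10  *  (s^3  *  (L  *  inner Xs Us)) + 4  *  (s^4  *  (L  *  inner Xs Us)) - 8  *  (s^5  *  (L  *  inner Xs Us)) - 2  *  (s^6  *  (L  *  inner Xs Us)) + 2  *  (s^7  *  (L  *  inner Xs Us))), 0, 0, 0, 0, 0, 0, 0, 0, 0, 0, 0, 0, 0, 0, 0, 0, 0, 0, 0, 0, 0, 0, 0, 0, 0, 0]"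
    unfolding k power2_norm_eq_inner sum_list_simps
    apply ((simp only: inner_simps inner_minus_left inner_minus_right inner_commute)?)
    by (simp add: divide_simps; algebra)
  have e14: "2  *  ((2 * s-s^2)  *  (Gs - G2 - L * k^2  *  inner (T2) (Xs - (Z2)))) = sum_list [0, 0, 0, 0, (- 4  *  (s  *  G2) + 2  *  (s^2  *  G2)), (4  *  (s  *  Gs) - 2  *  (s^2  *  Gs)), 0, 0, 0, 0, 0, 0, 0, 0, 0, 0, 0, 0, 0, 0, 0, 0, 0, 0, 0, 0, 0, 0, 0, (- 4  *  (s  *  (L  *  inner Xs T2)) + 2  *  (s^2  *  (L  *  inner Xs T2)) + 8  *  (s^3  *  (L  *  inner Xs T2)) - 4  *  (s^4  *  (L  *  inner Xs T2)) - 4  *  (s^5  *  (L  *  inner Xs T2)) + 2  *  (s^6  *  (L  *  inner Xs T2))), 0, 0, 0, 0, 0, 0, 0, 0, 0, 0, 0, 0, 0, 0, 0, 0, 0, 0, 0, 0, 0, 0, 0, 0, 0, (4  *  (s  *  (L  *  inner Z2 T2)) - 2  *  (s^2  *  (L  *  inner Z2 T2)) - 8  *  (s^3  *  (L  *  inner Z2 T2)) + 4  *  (s^4  *  (L  *  inner Z2 T2)) + 4  *  (s^5  *  (L  *  inner Z2 T2)) - 2  *  (s^6  *  (L  *  inner Z2 T2))), 0]"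
    unfolding k power2_norm_eq_inner sum_list_simps
    apply ((simp only: inner_simps inner_minus_left inner_minus_right inner_commute)?)
    by (simp add: divide_simps; algebra)
  have e15: "2  *  ((2 * s-s^2)  *  (L * k^2/2  *  (norm (T2 - - Us))^2)) = sum_list [0, 0, 0, 0, 0, 0, 0, 0, 0, 0, 0, 0, 0, 0, (2  *  (s  *  (L  *  inner T2 T2)) - 1  *  (s^2  *  (L  *  inner T2 T2)) - 4  *  (s^3  *  (L  *  inner T2 T2)) + 2  *  (s^4  *  (L  *  inner T2 T2)) + 2  *  (s^5  *  (L  *  inner T2 T2)) - 1  *  (s^6  *  (L  *  inner T2 T2))), 0, 0, 0, 0, 0, 0, 0, 0, (4  *  (s  *  (L  *  inner Us T2)) - 2  *  (s^2  *  (L  *  inner Us T2)) - 8  *  (s^3  *  (L  *  inner Us T2)) + 4  *  (s^4  *  (L  *  inner Us T2)) + 4  *  (s^5  *  (L  *  inner Us T2)) - 2  *  (s^6  *  (L  *  inner Us T2))), (2  *  (s  *  (L  *  inner Us Us)) - 1  *  (s^2  *  (L  *  inner Us Us)) - 4  *  (s^3  *  (L  *  inner Us Us)) + 2  *  (s^4  *  (L  *  inner Us Us)) + 2  *  (s^5  *  (L  *  inner Us Us)) - 1  *  (s^6  *  (L  *  inner Us Us))), 0, 0, 0, 0, 0, 0, 0, 0, 0, 0, 0, 0, 0, 0, 0, 0, 0, 0, 0, 0, 0, 0, 0, 0, 0, 0, 0, 0, 0, 0, 0, 0]"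
    unfolding k power2_norm_eq_inner sum_list_simps
    apply ((simp only: inner_simps inner_minus_left inner_minus_right inner_commute)?)
    by (simp add: divide_simps; algebra)
  have e16: "2  *  ((1-s)^2  *  (L * k^2/2  *  (norm (T1 - T2))^2)) = sum_list [0, 0, 0, 0, 0, 0, (1  *  (L  *  inner T1 T1) - 2  *  (s  *  (L  *  inner T1 T1)) - 1  *  (s^2  *  (L  *  inner T1 T1)) + 4  *  (s^3  *  (L  *  inner T1 T1)) - 1  *  (s^4  *  (L  *  inner T1 T1)) - 2  *  (s^5  *  (L  *  inner T1 T1)) + 1  *  (s^6  *  (L  *  inner T1 T1))), (- 2  *  (L  *  inner T1 T2) + 4  *  (s  *  (L  *  inner T1 T2)) + 2  *  (s^2  *  (L  *  inner T1 T2)) - 8  *  (s^3  *  (L  *  inner T1 T2)) + 2  *  (s^4  *  (L  *  inner T1 T2)) + 4  *  (s^5  *  (L  *  inner T1 T2)) - 2  *  (s^6  *  (L  *  inner T1 T2))), 0, 0, 0, 0, 0, 0, (1  *  (L  *  inner T2 T2) - 2  *  (s  *  (L  *  inner T2 T2)) - 1  *  (s^2  *  (L  *  inner T2 T2)) + 4  *  (s^3  *  (L  *  inner T2 T2)) - 1  *  (s^4  *  (L  *  inner T2 T2)) - 2  *  (s^5  *  (L  *  inner T2 T2)) + 1  *  (s^6  *  (L  *  inner T2 T2))), 0, 0, 0, 0, 0, 0, 0, 0, 0, 0, 0, 0, 0, 0, 0, 0, 0, 0, 0, 0, 0, 0, 0, 0, 0, 0, 0, 0, 0, 0, 0, 0,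 0, 0, 0, 0, 0, 0, 0, 0, 0, 0]"
    unfolding k power2_norm_eq_inner sum_list_simps
    apply ((simp only: inner_simps inner_minus_left inner_minus_right inner_commute)?)
    by (simp add: divide_simps; algebra)
  have e17: "2  *  (L  *  (inner ((1+s) *\<^sub>R Y1 - (2 * s) *\<^sub>R Z1 - (1-s) *\<^sub>R (Y0 - U0 - T1)) ((1 - s - 2 * s^2 + 2 * s^3 + s^4 - s^5) *\<^sub>R Us + (s^2 - 2 * s^3 + 2 * s^5 - s^6) *\<^sub>R ((1+s) *\<^sub>R Y1 - (2 * s) *\<^sub>R Z1 - (1-s) *\<^sub>R (Y0 - U0 - T1)) + (2 * s^3 - 4 * s^4 + 4 * s^6 - 2 * s^7) *\<^sub>R Z1 + (s^2 - 3 * s^3 + 2 * s^4 + 2 * s^5 - 3 * s^6 + s^7) *\<^sub>R Y0 + (- 1 * s^2 + 3 * s^3 - 2 * s^4 - 2 * s^5 + 3 * s^6 - s^7) *\<^sub>R U0 + (- 1 * s^2 + 3 * s^3 - 2 * s^4 - 2 * s^5 + 3 * s^6 - s^7) *\<^sub>R T1 + (- 1 * s^2 + s^3 + 2 * s^4 - 2 * s^5 - s^6 + s^7) *\<^sub>R Xs + (- 1 + s + 2 * s^2 - 2 * s^3 - s^4 + s^5) *\<^sub>R W1 + (- 2 * s^2 + 2 * s^3 + 2 * s^4 - 2 * s^5) *\<^sub>R (s *\<^sub>R Z2 - (s * (1-s)) *\<^sub>R Z1 - (s^2) *\<^sub>R Y1 + W1 + T2)))) = sum_list [0, 0, 0,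 0, 0, 0, 0, (- 4  *  (s^2  *  (L  *  inner T1 T2)) + 8  *  (s^3  *  (L  *  inner T1 T2)) - 8  *  (s^5  *  (L  *  inner T1 T2)) + 4  *  (s^6  *  (L  *  inner T1 T2))), (2  *  (L  *  inner T1 Us) - 4  *  (s  *  (L  *  inner T1 Us)) - 2  *  (s^2  *  (L  *  inner T1 Us)) + 8  *  (s^3  *  (L  *  inner T1 Us)) - 2  *  (s^4  *  (L  *  inner T1 Us)) - 4  *  (s^5  *  (L  *  inner T1 Us)) + 2  *  (s^6  *  (L  *  inner T1 Us))), (- 2  *  (L  *  inner T1 W1) + 4  *  (s  *  (L  *  inner T1 W1)) - 2  *  (s^2  *  (L  *  inner T1 W1)) + 2  *  (s^4  *  (L  *  inner T1 W1)) - 4  *  (s^5  *  (L  *  inner T1 W1)) + 2  *  (s^6  *  (L  *  inner T1 W1))), (- 2  *  (s^2  *  (L  *  inner T1 Xs)) + 4  *  (s^3  *  (L  *  inner T1 Xs)) + 2  *  (s^4  *  (L  *  inner T1 Xs)) - 8  *  (s^5  *  (L  *  inner T1 Xs)) + 2  *  (s^6  *  (L  *  inner T1 Xs)) + 4  *  (s^7  *  (L  *  inner T1 Xs)) - 2  *  (s^8  *  (L  *  inner T1 Xs))), (2  *  (s^2  *  (L  *  inner T1 Y1)) - 4  *  (s^3  *  (L  *  inner T1 Y1)) + 2  *  (s^4  *  (L  *  inner T1 Y1)) - 2  *  (s^6  *  (L  *  inner T1 Y1)) + 4  *  (s^7  *  (L  *  inner T1 Y1)) - 2  *  (s^8  *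  (L  *  inner T1 Y1))), (4  *  (s^3  *  (L  *  inner T1 Z1)) - 12  *  (s^4  *  (L  *  inner T1 Z1)) + 8  *  (s^5  *  (L  *  inner T1 Z1)) + 8  *  (s^6  *  (L  *  inner T1 Z1)) - 12  *  (s^7  *  (L  *  inner T1 Z1)) + 4  *  (s^8  *  (L  *  inner T1 Z1))), (- 4  *  (s^3  *  (L  *  inner T1 Z2)) + 8  *  (s^4  *  (L  *  inner T1 Z2)) - 8  *  (s^6  *  (L  *  inner T1 Z2)) + 4  *  (s^7  *  (L  *  inner T1 Z2))), 0, (- 4  *  (s^2  *  (L  *  inner U0 T2)) + 8  *  (s^3  *  (L  *  inner U0 T2)) - 8  *  (s^5  *  (L  *  inner U0 T2)) + 4  *  (s^6  *  (L  *  inner U0 T2))), 0, (2  *  (L  *  inner U0 Us) - 4  *  (s  *  (L  *  inner U0 Us)) - 2  *  (s^2  *  (L  *  inner U0 Us)) + 8  *  (s^3  *  (L  *  inner U0 Us)) - 2  *  (s^4  *  (L  *  inner U0 Us)) - 4  *  (s^5  *  (L  *  inner U0 Us)) + 2  *  (s^6  *  (L  *  inner U0 Us))), (- 2  *  (L  *  inner U0 W1) + 4  *  (s  *  (L  *  inner U0 W1)) - 2  *  (s^2  *  (L  *  inner U0 W1)) + 2  *  (s^4  *  (L  *  inner U0 W1)) - 4  *  (s^5  *  (L  *  inner U0 W1)) + 2  *  (s^6  *  (L  *  inner U0 W1))), (- 2  *  (s^2  *  (L  *  inner U0 Xs)) + 4  *  (s^3  *  (L  *  inner U0 Xs)) +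 2  *  (s^4  *  (L  *  inner U0 Xs)) - 8  *  (s^5  *  (L  *  inner U0 Xs)) + 2  *  (s^6  *  (L  *  inner U0 Xs)) + 4  *  (s^7  *  (L  *  inner U0 Xs)) - 2  *  (s^8  *  (L  *  inner U0 Xs))), (2  *  (s^2  *  (L  *  inner U0 Y1)) - 4  *  (s^3  *  (L  *  inner U0 Y1)) + 2  *  (s^4  *  (L  *  inner U0 Y1)) - 2  *  (s^6  *  (L  *  inner U0 Y1)) + 4  *  (s^7  *  (L  *  inner U0 Y1)) - 2  *  (s^8  *  (L  *  inner U0 Y1))), (4  *  (s^3  *  (L  *  inner U0 Z1)) - 12  *  (s^4  *  (L  *  inner U0 Z1)) + 8  *  (s^5  *  (L  *  inner U0 Z1)) + 8  *  (s^6  *  (L  *  inner U0 Z1)) - 12  *  (s^7  *  (L  *  inner U0 Z1)) + 4  *  (s^8  *  (L  *  inner U0 Z1))), (- 4  *  (s^3  *  (L  *  inner U0 Z2)) + 8  *  (s^4  *  (L  *  inner U0 Z2)) - 8  *  (s^6  *  (L  *  inner U0 Z2)) + 4  *  (s^7  *  (L  *  inner U0 Z2))), 0, 0, 0, (2  *  (L  *  inner Us Y1) - 6  *  (s^2  *  (L  *  inner Us Y1)) + 6  *  (s^4  *  (L  *  inner Us Y1)) - 2  *  (s^6  *  (L  *  inner Us Y1))), 0, 0, 0, 0, 0, 0, (- 2  *  (s^2  *  (L  *  inner Xs Y1)) + 6  *  (s^4  *  (L  *  inner Xs Y1)) - 6  *  (s^6  *  (L  *  inner Xs Y1)) + 2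  *  (s^8  *  (L  *  inner Xs Y1))), 0, (4  *  (s^2  *  (L  *  inner Y0 T2)) - 8  *  (s^3  *  (L  *  inner Y0 T2)) + 8  *  (s^5  *  (L  *  inner Y0 T2)) - 4  *  (s^6  *  (L  *  inner Y0 T2))), 0, (- 2  *  (L  *  inner Y0 Us) + 4  *  (s  *  (L  *  inner Y0 Us)) + 2  *  (s^2  *  (L  *  inner Y0 Us)) - 8  *  (s^3  *  (L  *  inner Y0 Us)) + 2  *  (s^4  *  (L  *  inner Y0 Us)) + 4  *  (s^5  *  (L  *  inner Y0 Us)) - 2  *  (s^6  *  (L  *  inner Y0 Us))), (2  *  (L  *  inner Y0 W1) - 4  *  (s  *  (L  *  inner Y0 W1)) + 2  *  (s^2  *  (L  *  inner Y0 W1)) - 2  *  (s^4  *  (L  *  inner Y0 W1)) + 4  *  (s^5  *  (L  *  inner Y0 W1)) - 2  *  (s^6  *  (L  *  inner Y0 W1))), (2  *  (s^2  *  (L  *  inner Y0 Xs)) - 4  *  (s^3  *  (L  *  inner Y0 Xs)) - 2  *  (s^4  *  (L  *  inner Y0 Xs)) + 8  *  (s^5  *  (L  *  inner Y0 Xs)) - 2  *  (s^6  *  (L  *  inner Y0 Xs)) - 4  *  (s^7  *  (L  *  inner Y0 Xs)) + 2  *  (s^8  *  (L  *  inner Y0 Xs))), 0, (- 2  *  (s^2  *  (L  *  inner Y0 Y1)) + 4  *  (s^3  *  (L  *  inner Y0 Y1)) - 2  *  (s^4  *  (L  *  inner Y0 Y1)) + 2  *  (s^6  *  (L  *  inner Y0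 Y1)) - 4  *  (s^7  *  (L  *  inner Y0 Y1)) + 2  *  (s^8  *  (L  *  inner Y0 Y1))), (- 4  *  (s^3  *  (L  *  inner Y0 Z1)) + 12  *  (s^4  *  (L  *  inner Y0 Z1)) - 8  *  (s^5  *  (L  *  inner Y0 Z1)) - 8  *  (s^6  *  (L  *  inner Y0 Z1)) + 12  *  (s^7  *  (L  *  inner Y0 Z1)) - 4  *  (s^8  *  (L  *  inner Y0 Z1))), (4  *  (s^3  *  (L  *  inner Y0 Z2)) - 8  *  (s^4  *  (L  *  inner Y0 Z2)) + 8  *  (s^6  *  (L  *  inner Y0 Z2)) - 4  *  (s^7  *  (L  *  inner Y0 Z2))), (- 4  *  (s^2  *  (L  *  inner Y1 T2)) + 8  *  (s^4  *  (L  *  inner Y1 T2)) - 4  *  (s^6  *  (L  *  inner Y1 T2))), (- 2  *  (L  *  inner Y1 W1) + 2  *  (s^2  *  (L  *  inner Y1 W1)) + 2  *  (s^4  *  (L  *  inner Y1 W1)) - 2  *  (s^6  *  (L  *  inner Y1 W1))), (2  *  (s^2  *  (L  *  inner Y1 Y1)) - 2  *  (s^4  *  (L  *  inner Y1 Y1)) - 2  *  (s^6  *  (L  *  inner Y1 Y1)) + 2  *  (s^8  *  (L  *  inner Y1 Y1))), (- 4  *  (s^3  *  (L  *  inner Y1 Z2)) + 8  *  (s^5  *  (L  *  inner Y1 Z2)) - 4  *  (s^7  *  (L  *  inner Y1 Z2))), (8  *  (s^3  *  (L  *  inner Z1 T2)) - 8  *  (s^4  *  (L  *  inner Z1 T2))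 - 8  *  (s^5  *  (L  *  inner Z1 T2)) + 8  *  (s^6  *  (L  *  inner Z1 T2))), (- 4  *  (s  *  (L  *  inner Z1 Us)) + 4  *  (s^2  *  (L  *  inner Z1 Us)) + 8  *  (s^3  *  (L  *  inner Z1 Us)) - 8  *  (s^4  *  (L  *  inner Z1 Us)) - 4  *  (s^5  *  (L  *  inner Z1 Us)) + 4  *  (s^6  *  (L  *  inner Z1 Us))), (4  *  (s  *  (L  *  inner Z1 W1)) - 4  *  (s^2  *  (L  *  inner Z1 W1)) - 4  *  (s^5  *  (L  *  inner Z1 W1)) + 4  *  (s^6  *  (L  *  inner Z1 W1))), (4  *  (s^3  *  (L  *  inner Z1 Xs)) - 4  *  (s^4  *  (L  *  inner Z1 Xs)) - 8  *  (s^5  *  (L  *  inner Z1 Xs)) + 8  *  (s^6  *  (L  *  inner Z1 Xs)) + 4  *  (s^7  *  (L  *  inner Z1 Xs)) - 4  *  (s^8  *  (L  *  inner Z1 Xs))), (- 8  *  (s^5  *  (L  *  inner Z1 Y1)) + 8  *  (s^6  *  (L  *  inner Z1 Y1)) + 8  *  (s^7  *  (L  *  inner Z1 Y1)) - 8  *  (s^8  *  (L  *  inner Z1 Y1))), (- 8  *  (s^4  *  (L  *  inner Z1 Z1)) + 16  *  (s^5  *  (L  *  inner Z1 Z1)) - 16  *  (s^7  *  (L  *  inner Z1 Z1)) + 8  *  (s^8  *  (L  *  inner Z1 Z1))), (8  *  (s^4  *  (L  *  inner Z1 Z2)) - 8  *  (s^5  *  (L  *  inner Z1 Z2)) - 8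  *  (s^6  *  (L  *  inner Z1 Z2)) + 8  *  (s^7  *  (L  *  inner Z1 Z2))), 0, 0]"
    unfolding k power2_norm_eq_inner sum_list_simps
    apply ((simp only: inner_simps inner_minus_left inner_minus_right inner_commute)?)
    by (simp add: divide_simps; algebra)
  have e18: "2  *  (L  *  (inner (s *\<^sub>R Z2 - (s * (1-s)) *\<^sub>R Z1 - (s^2) *\<^sub>R Y1 + W1 + T2) ((- 1 - 2 * s + 3 * s^2 + 4 * s^3 - 3 * s^4 - 2 * s^5 + s^6) *\<^sub>R Us + (- 1 + 2 * s^2 - s^4) *\<^sub>R (s *\<^sub>R Z2 - (s * (1-s)) *\<^sub>R Z1 - (s^2) *\<^sub>R Y1 + W1 + T2) + (- 2 * s + 2 * s^2 + 2 * s^5 - 2 * s^6) *\<^sub>R Z1 + (- 2 * s^2 + 4 * s^3 - 4 * s^5 + 2 * s^6) *\<^sub>R Y0 + (2 * s^2 - 4 * s^3 + 4 * s^5 - 2 * s^6) *\<^sub>R U0 + (1 - 2 * s + s^2 - s^4 + 2 * s^5 - s^6) *\<^sub>R T1 + (2 - 4 * s^2 + 2 * s^4) *\<^sub>R W1 + (2 * s - 4 * s^3 + 2 * s^5) *\<^sub>R Xs))) = sum_list [0, 0, 0, 0, 0, 0, 0, (2  *  (L  *  inner T1 T2) - 4  *  (s  *  (L  *  inner T1 T2)) + 2  *  (s^2  *  (L  *  inner T1 T2)) - 2  *  (s^4  *  (L  *  inner T1 T2)) + 4  *  (s^5  *  (L  *  inner T1 T2)) - 2  *  (s^6  *  (L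  *  inner T1 T2))), 0, (2  *  (L  *  inner T1 W1) - 4  *  (s  *  (L  *  inner T1 W1)) + 2  *  (s^2  *  (L  *  inner T1 W1)) - 2  *  (s^4  *  (L  *  inner T1 W1)) + 4  *  (s^5  *  (L  *  inner T1 W1)) - 2  *  (s^6  *  (L  *  inner T1 W1))), 0, (- 2  *  (s^2  *  (L  *  inner T1 Y1)) + 4  *  (s^3  *  (L  *  inner T1 Y1)) - 2  *  (s^4  *  (L  *  inner T1 Y1)) + 2  *  (s^6  *  (L  *  inner T1 Y1)) - 4  *  (s^7  *  (L  *  inner T1 Y1)) + 2  *  (s^8  *  (L  *  inner T1 Y1))), (- 2  *  (s  *  (L  *  inner T1 Z1)) + 6  *  (s^2  *  (L  *  inner T1 Z1)) - 6  *  (s^3  *  (L  *  inner T1 Z1)) + 2  *  (s^4  *  (L  *  inner T1 Z1)) + 2  *  (s^5  *  (L  *  inner T1 Z1)) - 6  *  (s^6  *  (L  *  inner T1 Z1)) + 6  *  (s^7  *  (L  *  inner T1 Z1)) - 2  *  (s^8  *  (L  *  inner T1 Z1))), (2  *  (s  *  (L  *  inner T1 Z2)) - 4  *  (s^2  *  (L  *  inner T1 Z2)) + 2  *  (s^3  *  (L  *  inner T1 Z2)) - 2  *  (s^5  *  (L  *  inner T1 Z2)) + 4  *  (s^6  *  (L  *  inner T1 Z2)) - 2  *  (s^7  *  (L  *  inner T1 Z2))), (- 2  *  (L  *  inner T2 T2) + 4  *  (s^2  *  (L  *  inner T2 T2)) - 2  *  (s^4  *  (L  *  inner T2 T2))),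 (4  *  (s^2  *  (L  *  inner U0 T2)) - 8  *  (s^3  *  (L  *  inner U0 T2)) + 8  *  (s^5  *  (L  *  inner U0 T2)) - 4  *  (s^6  *  (L  *  inner U0 T2))), 0, 0, (4  *  (s^2  *  (L  *  inner U0 W1)) - 8  *  (s^3  *  (L  *  inner U0 W1)) + 8  *  (s^5  *  (L  *  inner U0 W1)) - 4  *  (s^6  *  (L  *  inner U0 W1))), 0, (- 4  *  (s^4  *  (L  *  inner U0 Y1)) + 8  *  (s^5  *  (L  *  inner U0 Y1)) - 8  *  (s^7  *  (L  *  inner U0 Y1)) + 4  *  (s^8  *  (L  *  inner U0 Y1))), (- 4  *  (s^3  *  (L  *  inner U0 Z1)) + 12  *  (s^4  *  (L  *  inner U0 Z1)) - 8  *  (s^5  *  (L  *  inner U0 Z1)) - 8  *  (s^6  *  (L  *  inner U0 Z1)) + 12  *  (s^7  *  (L  *  inner U0 Z1)) - 4  *  (s^8  *  (L  *  inner U0 Z1))), (4  *  (s^3  *  (L  *  inner U0 Z2)) - 8  *  (s^4  *  (L  *  inner U0 Z2)) + 8  *  (s^6  *  (L  *  inner U0 Z2)) - 4  *  (s^7  *  (L  *  inner U0 Z2))), (- 2  *  (L  *  inner Us T2) - 4  *  (s  *  (L  *  inner Us T2)) + 6  *  (s^2  *  (L  *  inner Us T2)) + 8  *  (s^3  *  (L  *  inner Us T2)) - 6  *  (s^4  *  (L  *  inner Us T2)) - 4  *  (s^5  *  (L  *  inner Us T2)) + 2  *  (s^6  *  (L  *  inner Us T2))), 0, (- 2  *  (L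  *  inner Us W1) - 4  *  (s  *  (L  *  inner Us W1)) + 6  *  (s^2  *  (L  *  inner Us W1)) + 8  *  (s^3  *  (L  *  inner Us W1)) - 6  *  (s^4  *  (L  *  inner Us W1)) - 4  *  (s^5  *  (L  *  inner Us W1)) + 2  *  (s^6  *  (L  *  inner Us W1))), (2  *  (s^2  *  (L  *  inner Us Y1)) + 4  *  (s^3  *  (L  *  inner Us Y1)) - 6  *  (s^4  *  (L  *  inner Us Y1)) - 8  *  (s^5  *  (L  *  inner Us Y1)) + 6  *  (s^6  *  (L  *  inner Us Y1)) + 4  *  (s^7  *  (L  *  inner Us Y1)) - 2  *  (s^8  *  (L  *  inner Us Y1))), (- 2  *  (s  *  (L  *  inner Us Z2)) - 4  *  (s^2  *  (L  *  inner Us Z2)) + 6  *  (s^3  *  (L  *  inner Us Z2)) + 8  *  (s^4  *  (L  *  inner Us Z2)) - 6  *  (s^5  *  (L  *  inner Us Z2)) - 4  *  (s^6  *  (L  *  inner Us Z2)) + 2  *  (s^7  *  (L  *  inner Us Z2))), (2  *  (L  *  inner W1 W1) - 4  *  (s^2  *  (L  *  inner W1 W1)) + 2  *  (s^4  *  (L  *  inner W1 W1))), (4  *  (s  *  (L  *  inner Xs T2)) - 8  *  (s^3  *  (L  *  inner Xs T2)) + 4  *  (s^5  *  (L  *  inner Xs T2))), 0, (4  *  (s  *  (L  *  inner Xs W1)) - 8  *  (s^3  *  (L  *  inner Xs W1)) + 4  *  (s^5  *  (L  *  inner Xs W1))), 0, (- 4  *  (s^3  *  (L  *  inner Xs Y1))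 + 8  *  (s^5  *  (L  *  inner Xs Y1)) - 4  *  (s^7  *  (L  *  inner Xs Y1))), (4  *  (s^2  *  (L  *  inner Xs Z2)) - 8  *  (s^4  *  (L  *  inner Xs Z2)) + 4  *  (s^6  *  (L  *  inner Xs Z2))), (- 4  *  (s^2  *  (L  *  inner Y0 T2)) + 8  *  (s^3  *  (L  *  inner Y0 T2)) - 8  *  (s^5  *  (L  *  inner Y0 T2)) + 4  *  (s^6  *  (L  *  inner Y0 T2))), 0, 0, (- 4  *  (s^2  *  (L  *  inner Y0 W1)) + 8  *  (s^3  *  (L  *  inner Y0 W1)) - 8  *  (s^5  *  (L  *  inner Y0 W1)) + 4  *  (s^6  *  (L  *  inner Y0 W1))), 0, 0, (4  *  (s^4  *  (L  *  inner Y0 Y1)) - 8  *  (s^5  *  (L  *  inner Y0 Y1)) + 8  *  (s^7  *  (L  *  inner Y0 Y1)) - 4  *  (s^8  *  (L  *  inner Y0 Y1))), (4  *  (s^3  *  (L  *  inner Y0 Z1)) - 12  *  (s^4  *  (L  *  inner Y0 Z1)) + 8  *  (s^5  *  (L  *  inner Y0 Z1)) + 8  *  (s^6  *  (L  *  inner Y0 Z1)) - 12  *  (s^7  *  (L  *  inner Y0 Z1)) + 4  *  (s^8  *  (L  *  inner Y0 Z1))), (- 4  *  (s^3  *  (L  *  inner Y0 Z2)) + 8  *  (s^4  *  (L  *  inner Y0 Z2)) - 8  *  (s^6  *  (L  *  inner Y0 Z2)) + 4  *  (s^7  *  (L  *  inner Y0 Z2))), (4  *  (s^2  *  (L  *  inner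 Y1 T2)) - 8  *  (s^4  *  (L  *  inner Y1 T2)) + 4  *  (s^6  *  (L  *  inner Y1 T2))), 0, (- 2  *  (s^4  *  (L  *  inner Y1 Y1)) + 4  *  (s^6  *  (L  *  inner Y1 Y1)) - 2  *  (s^8  *  (L  *  inner Y1 Y1))), (4  *  (s^3  *  (L  *  inner Y1 Z2)) - 8  *  (s^5  *  (L  *  inner Y1 Z2)) + 4  *  (s^7  *  (L  *  inner Y1 Z2))), (- 8  *  (s^3  *  (L  *  inner Z1 T2)) + 8  *  (s^4  *  (L  *  inner Z1 T2)) + 8  *  (s^5  *  (L  *  inner Z1 T2)) - 8  *  (s^6  *  (L  *  inner Z1 T2))), (2  *  (s  *  (L  *  inner Z1 Us)) + 2  *  (s^2  *  (L  *  inner Z1 Us)) - 10  *  (s^3  *  (L  *  inner Z1 Us)) - 2  *  (s^4  *  (L  *  inner Z1 Us)) + 14  *  (s^5  *  (L  *  inner Z1 Us)) - 2  *  (s^6  *  (L  *  inner Z1 Us)) - 6  *  (s^7  *  (L  *  inner Z1 Us)) + 2  *  (s^8  *  (L  *  inner Z1 Us))), (- 4  *  (s  *  (L  *  inner Z1 W1)) + 4  *  (s^2  *  (L  *  inner Z1 W1)) + 4  *  (s^5  *  (L  *  inner Z1 W1)) - 4  *  (s^6  *  (L  *  inner Z1 W1))), (- 4  *  (s^2  *  (L  *  inner Z1 Xs)) + 4  *  (s^3  *  (L  *  inner Z1 Xs)) + 8  *  (s^4  *  (L  *  inner Z1 Xs)) - 8  *  (s^5  *  (L  *  inner Z1 Xs))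 - 4  *  (s^6  *  (L  *  inner Z1 Xs)) + 4  *  (s^7  *  (L  *  inner Z1 Xs))), (8  *  (s^5  *  (L  *  inner Z1 Y1)) - 8  *  (s^6  *  (L  *  inner Z1 Y1)) - 8  *  (s^7  *  (L  *  inner Z1 Y1)) + 8  *  (s^8  *  (L  *  inner Z1 Y1))), (2  *  (s^2  *  (L  *  inner Z1 Z1)) - 4  *  (s^3  *  (L  *  inner Z1 Z1)) + 6  *  (s^4  *  (L  *  inner Z1 Z1)) - 8  *  (s^5  *  (L  *  inner Z1 Z1)) - 2  *  (s^6  *  (L  *  inner Z1 Z1)) + 12  *  (s^7  *  (L  *  inner Z1 Z1)) - 6  *  (s^8  *  (L  *  inner Z1 Z1))), (- 8  *  (s^4  *  (L  *  inner Z1 Z2)) + 8  *  (s^5  *  (L  *  inner Z1 Z2)) + 8  *  (s^6  *  (L  *  inner Z1 Z2)) - 8  *  (s^7  *  (L  *  inner Z1 Z2))), (- 4  *  (s  *  (L  *  inner Z2 T2)) + 8  *  (s^3  *  (L  *  inner Z2 T2)) - 4  *  (s^5  *  (L  *  inner Z2 T2))), (- 2  *  (s^2  *  (L  *  inner Z2 Z2)) + 4  *  (s^4  *  (L  *  inner Z2 Z2)) - 2  *  (s^6  *  (L  *  inner Z2 Z2)))]"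
    unfolding k power2_norm_eq_inner sum_list_simps
    apply ((simp only: inner_simps inner_minus_left inner_minus_right inner_commute)?)
    by (simp add: divide_simps; algebra)
  show ?thesis
  proof -
    have "2  *  ((1-s)^2 * (1-s^2)  *  (F0 - Fs - L * k^2  *  inner (Us) (Y0 - (Xs)) - s^2 * L * k^2/2  *  (norm (Y0 - (Xs)))^2 - L * k/2  *  (norm (U0 - (Us) - s^2 *\<^sub>R (Y0 - (Xs))))^2) + (1-s)^2 * s^2  *  (Gs - G1 - L * k^2  *  inner (T1) (Xs - (Z1))) + (1-s)^2 * (s * (s-1))  *  (G1 - Gs - L * k^2  *  inner (- Us) (Z1 - (Xs))) + (1-s)^2 * 1  *  (L * k^2/2  *  (norm (T1 - - Us))^2) + (1-s)^2 * 1  *  (s^2 * L * k^2  *  (norm (Z1 - Xs))^2)) = 2  *  ((1-s^2)  *  (F1 - Fs - L * k^2  *  inner (Us) (Y1 - (Xs)) - s^2 * L * k^2/2  *  (norm (Y1 - (Xs)))^2 - L * k/2  *  (norm (W1 - (Us) - s^2 *\<^sub>R (Y1 - (Xs))))^2) + s^2  *  (Gs - G2 - L * k^2  *  inner (T2) (Xs - (Z2))) + (s * (s-1))  *  (G2 - Gs - L * k^2  *  inner (- Us) (Z2 - (Xs))) + 1  *  (L * k^2/2  *  (norm (T2 - - Us))^2) + 1  *  (s^2 * L * k^2  *  (norm (Z2 - Xs))^2) + (1-s)^2 * (1-s^2)  *  (F0 - F1 - L * k^2  *  inner (W1) (Y0 - (Y1)) - s^2 * L * k^2/2  *  (norm (Y0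 - (Y1)))^2 - L * k/2  *  (norm (U0 - (W1) - s^2 *\<^sub>R (Y0 - (Y1))))^2) + (1-s^2) * (2 * s-s^2)  *  (Fs - F1 - L * k^2  *  inner (W1) (Xs - (Y1)) - s^2 * L * k^2/2  *  (norm (Xs - (Y1)))^2 - L * k/2  *  (norm (Us - (W1) - s^2 *\<^sub>R (Xs - (Y1))))^2) + (1-s)^2 * s  *  (G2 - G1 - L * k^2  *  inner (T1) (Z2 - (Z1))) + (2 * s-s^2) * (1+s)  *  (G2 - Gs - L * k^2  *  inner (- Us) (Z2 - (Xs))) + (2 * s-s^2)  *  (Gs - G2 - L * k^2  *  inner (T2) (Xs - (Z2))) + (2 * s-s^2)  *  (L * k^2/2  *  (norm (T2 - - Us))^2) + (1-s)^2  *  (L * k^2/2  *  (norm (T1 - T2))^2) + L  *  (inner ((1+s) *\<^sub>R Y1 - (2 * s) *\<^sub>R Z1 - (1-s) *\<^sub>R (Y0 - U0 - T1)) ((1 - s - 2 * s^2 + 2 * s^3 + s^4 - s^5) *\<^sub>R Us + (s^2 - 2 * s^3 + 2 * s^5 - s^6) *\<^sub>R ((1+s) *\<^sub>R Y1 - (2 * s) *\<^sub>R Z1 - (1-s) *\<^sub>R (Y0 - U0 - T1)) + (2 * s^3 - 4 * s^4 + 4 * s^6 - 2 * s^7) *\<^sub>R Z1 + (s^2 - 3 * s^3 + 2 * s^4 + 2 * s^5 - 3 * s^6 + s^7) *\<^sub>R Y0 + (- 1 * s^2 + 3 * s^3 - 2 * s^4 - 2 * s^5 + 3 * s^6 - s^7)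 *\<^sub>R U0 + (- 1 * s^2 + 3 * s^3 - 2 * s^4 - 2 * s^5 + 3 * s^6 - s^7) *\<^sub>R T1 + (- 1 * s^2 + s^3 + 2 * s^4 - 2 * s^5 - s^6 + s^7) *\<^sub>R Xs + (- 1 + s + 2 * s^2 - 2 * s^3 - s^4 + s^5) *\<^sub>R W1 + (- 2 * s^2 + 2 * s^3 + 2 * s^4 - 2 * s^5) *\<^sub>R (s *\<^sub>R Z2 - (s * (1-s)) *\<^sub>R Z1 - (s^2) *\<^sub>R Y1 + W1 + T2))) + L  *  (inner (s *\<^sub>R Z2 - (s * (1-s)) *\<^sub>R Z1 - (s^2) *\<^sub>R Y1 + W1 + T2) ((- 1 - 2 * s + 3 * s^2 + 4 * s^3 - 3 * s^4 - 2 * s^5 + s^6) *\<^sub>R Us + (- 1 + 2 * s^2 - s^4) *\<^sub>R (s *\<^sub>R Z2 - (s * (1-s)) *\<^sub>R Z1 - (s^2) *\<^sub>R Y1 + W1 + T2) + (- 2 * s + 2 * s^2 + 2 * s^5 - 2 * s^6) *\<^sub>R Z1 + (- 2 * s^2 + 4 * s^3 - 4 * s^5 + 2 * s^6) *\<^sub>R Y0 + (2 * s^2 - 4 * s^3 + 4 * s^5 - 2 * s^6) *\<^sub>R U0 + (1 - 2 * s + s^2 - s^4 + 2 * s^5 - s^6) *\<^sub>R T1 + (2 - 4 * s^2 + 2 * s^4) *\<^sub>R W1 + (2 * s - 4 * s^3 + 2 * s^5) *\<^sub>R Xs)))"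
      apply (subst two_sum14)
      apply (subst two_sum5)
      apply (simp only: e0 e1 e2 e3 e4 e5 e6 e7 e8 e9 e10 e11 e12 e13 e14 e15 e16 e17 e18)
      apply (simp only: sum_list_add2 length_map2_same list.size)
      apply (rule sum_list_cong2)
      apply (simp only: map2_Cons2 map2_Nil2 list_all2_Cons list_all2_NilNil simp_thms)
      apply (intro conjI)
      by algebra+
    then show ?thesis by simp
  qed
qed
lemma comb:
  fixes s a1 a2 a3 a4 a5 b1 b2 b3 b4 b5 c1 c2 c3 c4 c5 c6 c7 r1 r2 :: real
  assumes "(1-s)^2 * (1-s^2)  *  a1 + (1-s)^2 * s^2  *  a2 + (1-s)^2 * (s * (s-1))  *  a3 + (1-s)^2 * 1  *  a4 + (1-s)^2 * 1  *  a5 = (1-s^2)  *  b1 + s^2  *  b2 + (s * (s-1))  *  b3 + 1  *  b4 + 1  *  b5 + (1-s)^2 * (1-s^2)  *  c1 + (1-s^2) * (2 * s-s^2)  *  c2 + (1-s)^2 * s  *  c3 + (2 * s-s^2) * (1+s)  *  c4 + (2 * s-s^2)  *  c5 + (2 * s-s^2)  *  c6 + (1-s)^2  *  c7 + r1 + r2"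
    and "r1 = 0" and "r2 = 0"
  shows "(1-s)^2  *  ((1-s^2)  *  a1 + s^2  *  a2 + s * (s-1)  *  a3 + a4 + a5) - ((1-s^2)  *  b1 + s^2  *  b2 + s * (s-1)  *  b3 + b4 + b5) = (1-s)^2 * (1-s^2)  *  c1 + (1-s^2) * (2 * s-s^2)  *  c2 + (1-s)^2 * s  *  c3 + (2 * s-s^2) * (1+s)  *  c4 + (2 * s-s^2)  *  c5 + (2 * s-s^2)  *  c6 + (1-s)^2  *  c7"
  using assms by algebra

lemma poly_main:
  fixes Y0 U0 T1 Z1 W1 T2 Xs Us Y1 Z2 :: "'a::real_inner"
  assumes k: "k = (1-s) * (1+s)" and R1: "((1+s) *\<^sub>R Y1 - (2 * s) *\<^sub>R Z1 - (1-s) *\<^sub>R (Y0 - U0 - T1)) = 0" and R2: "(s *\<^sub>R Z2 - (s * (1-s)) *\<^sub>R Z1 - (s^2) *\<^sub>R Y1 + W1 + T2) = 0"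
  shows "(1-s)^2  *  ((1-s^2)  *  (F0 - Fs - L * k^2  *  inner (Us) (Y0 - (Xs)) - s^2 * L * k^2/2  *  (norm (Y0 - (Xs)))^2 - L * k/2  *  (norm (U0 - (Us) - s^2 *\<^sub>R (Y0 - (Xs))))^2) + s^2  *  (Gs - G1 - L * k^2  *  inner (T1) (Xs - (Z1))) + s * (s-1)  *  (G1 - Gs - L * k^2  *  inner (- Us) (Z1 - (Xs))) + (L * k^2/2  *  (norm (T1 - - Us))^2) + (s^2 * L * k^2  *  (norm (Z1 - Xs))^2)) - ((1-s^2)  *  (F1 - Fs - L * k^2  *  inner (Us) (Y1 - (Xs)) - s^2 * L * k^2/2  *  (norm (Y1 - (Xs)))^2 - L * k/2  *  (norm (W1 - (Us) - s^2 *\<^sub>R (Y1 - (Xs))))^2) + s^2  *  (Gs - G2 - L * k^2  *  inner (T2) (Xs - (Z2))) + s * (s-1)  *  (G2 - Gs - L * k^2  *  inner (- Us) (Z2 - (Xs))) + (L * k^2/2  *  (norm (T2 - - Us))^2) + (s^2 * L * k^2  *  (norm (Z2 - Xs))^2)) = (1-s)^2 * (1-s^2)  *  (F0 - F1 - L * k^2  *  inner (W1) (Y0 - (Y1)) - s^2 * L * k^2/2  *  (norm (Y0 - (Y1)))^2 - L * k/2  *  (norm (U0 - (W1) - s^2 *\<^sub>R (Y0 - (Y1))))^2) + (1-s^2) * (2 * s-s^2)  *  (Fs - F1 - L * k^2  *  inner (W1) (Xs - (Y1)) - s^2 * L * k^2/2  *  (norm (Xs - (Y1)))^2 - L * k/2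  *  (norm (Us - (W1) - s^2 *\<^sub>R (Xs - (Y1))))^2) + (1-s)^2 * s  *  (G2 - G1 - L * k^2  *  inner (T1) (Z2 - (Z1))) + (2 * s-s^2) * (1+s)  *  (G2 - Gs - L * k^2  *  inner (- Us) (Z2 - (Xs))) + (2 * s-s^2)  *  (Gs - G2 - L * k^2  *  inner (T2) (Xs - (Z2))) + (2 * s-s^2)  *  (L * k^2/2  *  (norm (T2 - - Us))^2) + (1-s)^2  *  (L * k^2/2  *  (norm (T1 - T2))^2)"
proof -
  have r1: "L  *  (inner ((1+s) *\<^sub>R Y1 - (2 * s) *\<^sub>R Z1 - (1-s) *\<^sub>R (Y0 - U0 - T1)) ((1 - s - 2 * s^2 + 2 * s^3 + s^4 - s^5) *\<^sub>R Us + (s^2 - 2 * s^3 + 2 * s^5 - s^6) *\<^sub>R ((1+s) *\<^sub>R Y1 - (2 * s) *\<^sub>R Z1 - (1-s) *\<^sub>R (Y0 - U0 - T1)) + (2 * s^3 - 4 * s^4 + 4 * s^6 - 2 * s^7) *\<^sub>R Z1 + (s^2 - 3 * s^3 + 2 * s^4 + 2 * s^5 - 3 * s^6 + s^7) *\<^sub>R Y0 + (- 1 * s^2 + 3 * s^3 - 2 * s^4 - 2 * s^5 + 3 * s^6 - s^7) *\<^sub>R U0 + (- 1 * s^2 + 3 * s^3 - 2 * s^4 - 2 * s^5 + 3 * s^6 - s^7) *\<^sub>R T1 + (- 1 * s^2 + s^3 + 2 * s^4 - 2 * s^5 - s^6 + s^7) *\<^sub>R Xs + (- 1 + s + 2 *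 s^2 - 2 * s^3 - s^4 + s^5) *\<^sub>R W1 + (- 2 * s^2 + 2 * s^3 + 2 * s^4 - 2 * s^5) *\<^sub>R (s *\<^sub>R Z2 - (s * (1-s)) *\<^sub>R Z1 - (s^2) *\<^sub>R Y1 + W1 + T2))) = 0" unfolding R1 by simp
  have r2: "L  *  (inner (s *\<^sub>R Z2 - (s * (1-s)) *\<^sub>R Z1 - (s^2) *\<^sub>R Y1 + W1 + T2) ((- 1 - 2 * s + 3 * s^2 + 4 * s^3 - 3 * s^4 - 2 * s^5 + s^6) *\<^sub>R Us + (- 1 + 2 * s^2 - s^4) *\<^sub>R (s *\<^sub>R Z2 - (s * (1-s)) *\<^sub>R Z1 - (s^2) *\<^sub>R Y1 + W1 + T2) + (- 2 * s + 2 * s^2 + 2 * s^5 - 2 * s^6) *\<^sub>R Z1 + (- 2 * s^2 + 4 * s^3 - 4 * s^5 + 2 * s^6) *\<^sub>R Y0 + (2 * s^2 - 4 * s^3 + 4 * s^5 - 2 * s^6) *\<^sub>R U0 + (1 - 2 * s + s^2 - s^4 + 2 * s^5 - s^6) *\<^sub>R T1 + (2 - 4 * s^2 + 2 * s^4) *\<^sub>R W1 + (2 * s - 4 * s^3 + 2 * s^5) *\<^sub>R Xs)) = 0" unfolding R2 by simp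
  show ?thesis by (rule comb[OF poly_identity[OF k] r1 r2])
qed




lemma N_scaled:
  fixes sa sb SA SB :: "'a::real_inner"
  assumes "sa = (L  *  k) *\<^sub>R SA" "sb = (L  *  k) *\<^sub>R SB" "L \<noteq> 0"
  shows "1/(2  *  L)   *   (norm (sa - sb))\<^sup>2 = (L  *  k^2/2   *   (norm (SA - SB))^2)"
proof -
  have "sa - sb = (L  *  k) *\<^sub>R (SA - SB)" using assms by (simp add: algebra_simps)
  then have "(norm (sa - sb))\<^sup>2 = (L  *  k)^2  *  (norm (SA - SB))\<^sup>2" by (simp add: power_mult_distrib)
  then show ?thesis using assms(3) by (simp add: power2_eq_square)
qed

lemma Z_scaled:
  fixes za zb ZA ZB :: "'a::real_inner"
  assumes "za = k *\<^sub>R ZA" "zb = k *\<^sub>R ZB" "\<mu> = s^2   *   L"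
  shows "\<mu>   *   (norm (za - zb))\<^sup>2 = (s^2  *  L  *  k^2   *   (norm (ZA - ZB))^2)"
proof -
  have "za - zb = k *\<^sub>R (ZA - ZB)" using assms by (simp add: algebra_simps)
  then show ?thesis using assms(3) by (simp add: power_mult_distrib)
qed

lemma orig_identity:
  fixes f g :: "'a::real_inner \<Rightarrow> real" and gf :: "'a \<Rightarrow> 'a" and y0 s1 z1 xs y1 z2 s2 :: 'a
  assumes s: "0 < s" "s < 1" and L: "0 < L" and mu: "\<mu> = s^2   *   L"
    and rel1: "(1+s) *\<^sub>R y1 = (2  *  s) *\<^sub>R z1 + (1-s) *\<^sub>R (y0 - (1/L) *\<^sub>R gf y0 - (1/L) *\<^sub>R s1)"
    and rel2: "s2 = (s  *  L) *\<^sub>R ((1-s) *\<^sub>R z1 + s *\<^sub>R y1 - (1/(s  *  L)) *\<^sub>R gf y1 - z2)"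
  shows "(1-s)^2   *   ((1-s^2)   *   I_f f gf \<mu> L y0 xs + s^2   *   I_g g xs z1 s1 + s  *  (s-1)   *   I_g g z1 xs (- gf xs)
            + 1/(2  *  L)   *   (norm (s1 - - gf xs))\<^sup>2 + \<mu>   *   (norm (z1 - xs))\<^sup>2)
       - ((1-s^2)   *   I_f f gf \<mu> L y1 xs + s^2   *   I_g g xs z2 s2 + s  *  (s-1)   *   I_g g z2 xs (- gf xs)
            + 1/(2  *  L)   *   (norm (s2 - - gf xs))\<^sup>2 + \<mu>   *   (norm (z2 - xs))\<^sup>2)
     = (1-s)^2  *  (1-s^2)   *   I_f f gf \<mu> L y0 y1 + (1-s^2)  *  (2  *  s-s^2)   *   I_f f gf \<mu> L xs y1
       + (1-s)^2  *  s   *   I_g g z2 z1 s1 + (2  *  s-s^2)  *  (1+s)   *   I_g g z2 xs (- gf xs) + (2  *  s-s^2)   *   I_g g xs z2 s2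
       + (2  *  s-s^2)   *   (1/(2  *  L)   *   (norm (s2 - - gf xs))\<^sup>2) + (1-s)^2   *   (1/(2  *  L)   *   (norm (s1 - s2))\<^sup>2)"
proof -
  define k where "k = (1-s)  *  (1+s)"
  have k0: "0 < k" using s by (simp add: k_def)
  have Lk: "L   *   k \<noteq> 0" using k0 L by simp
  have Lmu: "L - \<mu> = L   *   k" by (simp add: mu k_def algebra_simps power2_eq_square)
  define Y0 where "Y0 = (1/k) *\<^sub>R y0"
  define Z1 where "Z1 = (1/k) *\<^sub>R z1"
  define Xs where "Xs = (1/k) *\<^sub>R xs"
  define Y1 where "Y1 = (1/k) *\<^sub>R y1"
  define Z2 where "Z2 = (1/k) *\<^sub>R z2"
  define U0 where "U0 = (1/(L  *  k)) *\<^sub>R gf y0"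
  define Us where "Us = (1/(L  *  k)) *\<^sub>R gf xs"
  define W1 where "W1 = (1/(L  *  k)) *\<^sub>R gf y1"
  define T1 where "T1 = (1/(L  *  k)) *\<^sub>R s1"
  define T2 where "T2 = (1/(L  *  k)) *\<^sub>R s2"
  have y0: "y0 = k *\<^sub>R Y0" and z1: "z1 = k *\<^sub>R Z1" and xs: "xs = k *\<^sub>R Xs" and y1: "y1 = k *\<^sub>R Y1"
    and z2: "z2 = k *\<^sub>R Z2" using k0 by (simp_all add: Y0_def Z1_def Xs_def Y1_def Z2_def)
  have g0: "gf y0 = (L  *  k) *\<^sub>R U0" and gs: "gf xs = (L  *  k) *\<^sub>R Us" and g1: "gf y1 = (L  *  k) *\<^sub>R W1"
    and t1: "s1 = (L  *  k) *\<^sub>R T1" and t2: "s2 = (L  *  k) *\<^sub>R T2" and mgs: "- gf xs = (L  *  k) *\<^sub>R (- Us)"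
    using Lk by (simp_all add: U0_def Us_def W1_def T1_def T2_def)
  note IF = If_scaled[where f=f and gf=gf and \<mu>=\<mu> and L=L and s=s and k=k, OF _ _ _ _ mu Lmu Lk]
  note IG = Ig_scaled[where g=g and L=L and k=k]
  have L0: "L \<noteq> 0" using L by simp
  note c1 = IF[OF y0 xs g0 gs]
  note c2 = IG[OF xs z1 t1]
  note c3 = IG[OF z1 xs mgs]
  note c4 = N_scaled[OF t1 mgs L0]
  note c5 = Z_scaled[OF z1 xs mu]
  note c6 = IF[OF y1 xs g1 gs]
  note c7 = IG[OF xs z2 t2]
  note c8 = IG[OF z2 xs mgs]
  note c9 = N_scaled[OF t2 mgs L0]
  note c10 = Z_scaled[OF z2 xs mu]
  note c11 = IF[OF y0 y1 g0 g1]
  note c12 = IF[OF xs y1 gs g1]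
  note c13 = IG[OF z2 z1 t1]
  note c17 = N_scaled[OF t1 t2 L0]
  have R1z: "(1+s) *\<^sub>R Y1 - (2  *  s) *\<^sub>R Z1 - (1-s) *\<^sub>R (Y0 - U0 - T1) = 0"
  proof -
    have "k *\<^sub>R ((1+s) *\<^sub>R Y1 - (2  *  s) *\<^sub>R Z1 - (1-s) *\<^sub>R (Y0 - U0 - T1))
        = (1+s) *\<^sub>R y1 - (2  *  s) *\<^sub>R z1 - (1-s) *\<^sub>R (y0 - (1/L) *\<^sub>R gf y0 - (1/L) *\<^sub>R s1)"
      unfolding g0 t1 unfolding y0 z1 y1 using L0 by (simp add: algebra_simps)
    also have "\<dots> = 0" using rel1 by simp
    finally show ?thesis using k0 by simp
  qed
  have R2z: "s *\<^sub>R Z2 - (s  *  (1-s)) *\<^sub>R Z1 - (s^2) *\<^sub>R Y1 + W1 + T2 = 0"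
  proof -
    have "(L  *  k) *\<^sub>R (s *\<^sub>R Z2 - (s  *  (1-s)) *\<^sub>R Z1 - (s^2) *\<^sub>R Y1 + W1 + T2)
        = (s  *  L) *\<^sub>R z2 - (s  *  L  *  (1-s)) *\<^sub>R z1 - (s^2  *  L) *\<^sub>R y1 + gf y1 + s2"
      unfolding g1 t2 unfolding z2 z1 y1 by (simp add: algebra_simps)
    also have "\<dots> = 0" unfolding rel2 using s L by (simp add: algebra_simps power2_eq_square)
    finally show ?thesis using Lk by simp
  qed
  show ?thesis
    unfolding c1 c2 c3 c4 c5 c6 c7 c8 c9 c10 c11 c12 c13 c17
    by (rule poly_main[OF k_def R1z R2z])
qed

theorem lemma5:
  fixes f :: "'a::{real_inner, complete_space} \<Rightarrow> real"
    and gradf :: "'a \<Rightarrow> 'a"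
    and g :: "'a \<Rightarrow> real" and D :: "'a set"
    and \<mu> L :: real
    and x0 xs :: 'a
    and x y z zb :: "nat \<Rightarrow> 'a"
  assumes mu_pos: "0 < \<mu>" and mu_L: "\<mu> < L"
    and grad: "\<And>u. (f has_derivative (\<lambda>h. inner (gradf u) h)) (at u)"
    and strongly_convex: "convex_on UNIV (\<lambda>u. f u - \<mu> / 2  *  (norm u)\<^sup>2)"
    and smooth: "\<And>u v. norm (gradf u - gradf v) \<le> L  *  norm (u - v)"
    and g_prop: "proper_convex_lsc D g"
    and xs_min: "xs \<in> D" "\<And>u. u \<in> D \<Longrightarrow> f xs + g xs \<le> f u + g u"
    and xs_unique: "\<And>u. u \<in> D \<Longrightarrow> f u + g u \<le> f xs + g xs \<Longrightarrow> u = xs"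
    and x_0: "x 0 = x0" and z_0: "z 0 = x0"
  defines "q \<equiv> \<mu> / L"
  assumes y_def: "\<And>k. y k = (2  *  sqrt q / (1 + sqrt q)) *\<^sub>R z k + ((1 - sqrt q) / (1 + sqrt q)) *\<^sub>R x k"
    and zb_def: "\<And>k. zb (Suc k) = (1 - sqrt q) *\<^sub>R z k + sqrt q *\<^sub>R y k - (1 / (sqrt q  *  L)) *\<^sub>R gradf (y k)"
    and z_def: "\<And>k. z (Suc k) = prox D g (1 / (sqrt q  *  L)) (zb (Suc k))"
    and x_def: "\<And>k. x (Suc k) = y k - (1 / L) *\<^sub>R gradf (y k) - sqrt q *\<^sub>R (zb (Suc k) - z (Suc k))"
  defines "sg \<equiv> (\<lambda>k. (sqrt q  *  L) *\<^sub>R (zb k - z k))"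
    and "sgs \<equiv> - gradf xs"
  defines "V \<equiv> (\<lambda>k. (1 - q)  *  I_f f gradf \<mu> L (y (k - 1)) xs + q  *  I_g g xs (z k) (sg k)
              + sqrt q  *  (sqrt q - 1)  *  I_g g (z k) xs sgs
              + 1 / (2  *  L)  *  (norm (sg k - sgs))\<^sup>2 + \<mu>  *  (norm (z k - xs))\<^sup>2)"
  shows "\<forall>k\<ge>1. V (Suc k) \<le> (1 - sqrt q)\<^sup>2  *  V k"
proof -
  have L0: "0 < L" using mu_pos mu_L by linarith
  have q0: "0 < q" using mu_pos L0 by (simp add: q_def)
  have q1: "q < 1" using mu_L L0 by (simp add: q_def)
  define s where "s = sqrt q"
  have s0: "0 < s" using q0 by (simp add: s_def)
  have s1: "s < 1" using q1 q0 by (simp add: s_def)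
  have sq: "sqrt q = s" by (simp add: s_def)
  have qs: "q = s^2" using q0 by (simp add: s_def)
  have mu: "\<mu> = s^2  *  L" using L0 by (simp add: qs[symmetric] q_def)
  have sL0: "0 < s  *  L" using s0 L0 by simp
  have lbg: "(g xs + inner (gradf xs) xs) + inner (- gradf xs) w \<le> g w" if w: "w \<in> D" for w
    using opt_subgrad[OF grad smooth g_prop xs_min(1) xs_min(2) w]
    unfolding I_g_def by (simp add: inner_diff_right inner_minus_left)
  have gam: "0 < 1 / (s  *  L)" using sL0 by simp
  have zD: "z (Suc j) \<in> D" for j
    using prox_char(1)[OF g_prop lbg gam, of "zb (Suc j)"] z_def[of j] sq by simp
  have zsub: "0 \<le> I_g g w (z (Suc j)) (sg (Suc j))" if w: "w \<in> D" for j w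
  proof -
    have "(1 / (1 / (s  *  L))) *\<^sub>R (zb (Suc j) - z (Suc j)) = sg (Suc j)"
      by (simp add: sg_def sq)
    then show ?thesis
      using prox_char(2)[OF g_prop lbg gam w, of "zb (Suc j)"] z_def[of j] sq by simp
  qed
  show ?thesis
  proof (intro allI impI)
    fix n :: nat assume "1 \<le> n"
    then obtain m where n: "n = Suc m" by (cases n) auto
    have xeq: "x (Suc m) = y m - (1/L) *\<^sub>R gradf (y m) - (1/L) *\<^sub>R sg (Suc m)"
      using x_def[of m] L0 by (simp add: sg_def sq)
    have rel1: "(1+s) *\<^sub>R y (Suc m) = (2 * s) *\<^sub>R z (Suc m) + (1-s) *\<^sub>R (y m - (1/L) *\<^sub>R gradf (y m) - (1/L) *\<^sub>R sg (Suc m))"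
    proof -
      have "(1+s) *\<^sub>R y (Suc m) = (1+s) *\<^sub>R ((2  *  s / (1 + s)) *\<^sub>R z (Suc m) + ((1 - s) / (1 + s)) *\<^sub>R x (Suc m))"
        using y_def[of "Suc m"] by (simp add: sq)
      also have "\<dots> = (2 * s) *\<^sub>R z (Suc m) + (1-s) *\<^sub>R x (Suc m)"
        using s0 by (simp add: scaleR_add_right)
      finally show ?thesis unfolding xeq .
    qed
    have rel2: "sg (Suc (Suc m)) = (s * L) *\<^sub>R ((1-s) *\<^sub>R z (Suc m) + s *\<^sub>R y (Suc m) - (1/(s * L)) *\<^sub>R gradf (y (Suc m)) - z (Suc (Suc m)))"
      by (simp add: sg_def sq zb_def)
    note ID = orig_identity[OF s0 s1 L0 mu rel1 rel2, where f=f and g=g and xs=xs]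
    have Vk: "V (Suc m) = (1-s^2)  *  I_f f gradf \<mu> L (y m) xs + s^2  *  I_g g xs (z (Suc m)) (sg (Suc m))
        + s * (s-1)  *  I_g g (z (Suc m)) xs (- gradf xs) + 1/(2 * L)  *  (norm (sg (Suc m) - - gradf xs))\<^sup>2
        + \<mu>  *  (norm (z (Suc m) - xs))\<^sup>2"
      unfolding V_def sgs_def unfolding sq unfolding qs by simp
    have Vk1: "V (Suc (Suc m)) = (1-s^2)  *  I_f f gradf \<mu> L (y (Suc m)) xs + s^2  *  I_g g xs (z (Suc (Suc m))) (sg (Suc (Suc m)))
        + s * (s-1)  *  I_g g (z (Suc (Suc m))) xs (- gradf xs) + 1/(2 * L)  *  (norm (sg (Suc (Suc m)) - - gradf xs))\<^sup>2
        + \<mu>  *  (norm (z (Suc (Suc m)) - xs))\<^sup>2"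
      unfolding V_def sgs_def unfolding sq unfolding qs by simp
    have i1: "0 \<le> I_f f gradf \<mu> L (y m) (y (Suc m))" by (rule interp[OF grad smooth strongly_convex mu_L])
    have i2: "0 \<le> I_f f gradf \<mu> L xs (y (Suc m))" by (rule interp[OF grad smooth strongly_convex mu_L])
    have i3: "0 \<le> I_g g (z (Suc (Suc m))) (z (Suc m)) (sg (Suc m))" by (rule zsub[OF zD])
    have i4: "0 \<le> I_g g (z (Suc (Suc m))) xs (- gradf xs)"
      by (rule opt_subgrad[OF grad smooth g_prop xs_min(1) xs_min(2) zD])
    have i5: "0 \<le> I_g g xs (z (Suc (Suc m))) (sg (Suc (Suc m)))" by (rule zsub[OF xs_min(1)])
    have ss: "s^2 \<le> s" using s0 s1 by (simp add: power2_eq_square mult_left_le)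
    have a1: "0 \<le> 1 - s" and a2: "0 \<le> 1 - s^2" and a3: "0 \<le> 2 * s - s^2" and a4: "0 \<le> 1 + s"
      using s0 s1 ss by auto
    have l1: "0 \<le> (1-s)^2 * (1-s^2)" using a2 by simp
    have l2: "0 \<le> (1-s^2) * (2 * s-s^2)" using a2 a3 by simp
    have l3: "0 \<le> (1-s)^2 * s" using s0 by simp
    have l4: "0 \<le> (2 * s-s^2) * (1+s)" using a3 a4 by simp
    have l5: "0 \<le> 2 * s-s^2" using a3 by simp
    have cert: "0 \<le> (1-s)^2 * (1-s^2)  *  I_f f gradf \<mu> L (y m) (y (Suc m)) + (1-s^2) * (2 * s-s^2)  *  I_f f gradf \<mu> L xs (y (Suc m))
       + (1-s)^2 * s  *  I_g g (z (Suc (Suc m))) (z (Suc m)) (sg (Suc m)) + (2 * s-s^2) * (1+s)  *  I_g g (z (Suc (Suc m))) xs (- gradf xs)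
       + (2 * s-s^2)  *  I_g g xs (z (Suc (Suc m))) (sg (Suc (Suc m)))
       + (2 * s-s^2)  *  (1/(2 * L)  *  (norm (sg (Suc (Suc m)) - - gradf xs))\<^sup>2) + (1-s)^2  *  (1/(2 * L)  *  (norm (sg (Suc m) - sg (Suc (Suc m))))\<^sup>2)"
      using i1 i2 i3 i4 i5 l1 l2 l3 l4 l5 L0 a1 a2 a3 a4 s0
      by (intro add_nonneg_nonneg mult_nonneg_nonneg) auto
    have "V (Suc (Suc m)) \<le> (1 - s)^2  *  V (Suc m)"
      using ID cert unfolding Vk Vk1 by linarith
    then show "V (Suc n) \<le> (1 - sqrt q)^2  *  V n" unfolding n sq .
  qed
qed


end
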